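(* Let $G$ be a connected semisimple real algebraic group and $\theta\subset\Pi$ non-empty with $\theta=\mathrm i(\theta)$. Let $\mathcal D$ be a $\theta$-admissible cone of $\mathfrak a^+$. Then for any open cone $\mathcal C_0$ in $\mathfrak a^+$ containing $\mathcal D-\{0\}$, there exists a $\theta$-admissible closed cone $\mathcal C$ such that $\mathcal D-\{0\}\subset\operatorname{int}\mathcal C\subset\mathcal C\subset\mathcal C_0\cup\{0\}$.
   Context: $\mathfrak a$ is the Lie algebra of a maximal real split torus, $\mathfrak a^+$ a closed positive Weyl chamber, $\Pi$ the simple roots, $\mathcal W$ the Weyl group acting on $\mathfrak a$ by Ad, $\mathrm i(v)=-\mathrm{Ad}_{w_0}v$ the opposition involution ($w_0$ longest element), acting on $\Pi$ by $\mathrm i(\alpha)=\alpha\circ\mathrm i$. $\mathcal W_\theta$ is the subgroup of $\mathcal W$ fixing $\mathfrak a_\theta=\bigcap_{\alpha\in\Pi-\theta}\ker\alpha$ pointwise. For $\theta=\mathrm i(\theta)$, a closed cone $\mathcal C\subset\mathfrak a^+$ is $\theta$-admissible if (1) $\mathrm i(\mathcal C)=\mathcal C$, (2) $\mathcal W_\theta\mathcal C$ is convex, (3) $\mathcal C\cap\bigcup_{\alpha\in\theta}\ker\alpha=\{0\}$. An open cone in $\mathfrak a^+$ is a relatively open subset of $\mathfrak a^+$ invariant under positive scaling. *)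

theory Defs
  imports "HOL-Analysis.Analysis"
begin

text \<open>The statement only depends on the restricted root system of G, realised in
  the Euclidean space 'a (= Lie algebra of a maximal split torus, with the Killing
  form inner product). Roots/functionals alpha are represented by vectors, alpha(v) = alpha \<bullet> v.\<close>

definition refl :: "'a::euclidean_space \<Rightarrow> 'a \<Rightarrow> 'a" where
  "refl \<alpha> v = v - (2 * (\<alpha> \<bullet> v) / (\<alpha> \<bullet> \<alpha>)) *\<^sub>R \<alpha>"

text \<open>A (possibly non-reduced) crystallographic root system spanning 'a
  (semisimplicity: the roots span the split Cartan subspace).\<close>
definition root_system :: "'a::euclidean_space set \<Rightarrow> bool" where
  "root_system R \<longleftrightarrow> finite R \<and> 0 \<notin> R \<and> span R = UNIV \<and>
     (\<forall>\<alpha>\<in>R. \<forall>\<beta>\<in>R. refl \<alpha> \<beta> \<in> R) \<and>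
     (\<forall>\<alpha>\<in>R. \<forall>\<beta>\<in>R. 2 * (\<alpha> \<bullet> \<beta>) / (\<alpha> \<bullet> \<alpha>) \<in> \<int>)"

definition is_base :: "'a::euclidean_space set \<Rightarrow> 'a set \<Rightarrow> bool" where
  "is_base R \<Delta> \<longleftrightarrow> \<Delta> \<subseteq> R \<and> independent \<Delta> \<and>
     (\<forall>\<beta>\<in>R. \<exists>c. \<beta> = (\<Sum>\<alpha>\<in>\<Delta>. c \<alpha> *\<^sub>R \<alpha>) \<and>
        ((\<forall>\<alpha>\<in>\<Delta>. c \<alpha> \<ge> 0) \<or> (\<forall>\<alpha>\<in>\<Delta>. c \<alpha> \<le> 0)))"

definition chamber :: "'a::euclidean_space set \<Rightarrow> 'a set" where
  "chamber \<Delta> = {v. \<forall>\<alpha>\<in>\<Delta>. \<alpha> \<bullet> v \<ge> 0}"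

inductive_set weyl :: "'a::euclidean_space set \<Rightarrow> ('a \<Rightarrow> 'a) set" for R where
  weyl_id: "id \<in> weyl R"
| weyl_step: "\<alpha> \<in> R \<Longrightarrow> w \<in> weyl R \<Longrightarrow> refl \<alpha> \<circ> w \<in> weyl R"

definition w0 :: "'a::euclidean_space set \<Rightarrow> 'a set \<Rightarrow> 'a \<Rightarrow> 'a" where
  "w0 R \<Delta> = (THE w. w \<in> weyl R \<and> w ` chamber \<Delta> = uminus ` chamber \<Delta>)"

definition opp :: "'a::euclidean_space set \<Rightarrow> 'a set \<Rightarrow> 'a \<Rightarrow> 'a" where
  "opp R \<Delta> v = - w0 R \<Delta> v"

definition a_theta :: "'a::euclidean_space set \<Rightarrow> 'a set \<Rightarrow> 'a set" where
  "a_theta \<Delta> \<theta> = {v. \<forall>\<alpha>\<in>\<Delta> - \<theta>. \<alpha> \<bullet> v = 0}"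

definition weyl_theta :: "'a::euclidean_space set \<Rightarrow> 'a set \<Rightarrow> 'a set \<Rightarrow> ('a \<Rightarrow> 'a) set" where
  "weyl_theta R \<Delta> \<theta> = {w \<in> weyl R. \<forall>v\<in>a_theta \<Delta> \<theta>. w v = v}"

definition pos_cone :: "'a::real_vector set \<Rightarrow> bool" where
  "pos_cone C \<longleftrightarrow> (\<forall>x\<in>C. \<forall>t::real. t > 0 \<longrightarrow> t *\<^sub>R x \<in> C)"

definition admissible :: "'a::euclidean_space set \<Rightarrow> 'a set \<Rightarrow> 'a set \<Rightarrow> 'a set \<Rightarrow> bool" where
  "admissible R \<Delta> \<theta> C \<longleftrightarrow>
     closed C \<and> pos_cone C \<and> C \<subseteq> chamber \<Delta> \<and>
     opp R \<Delta> ` C = C \<and>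
     convex (\<Union>w\<in>weyl_theta R \<Delta> \<theta>. w ` C) \<and>
     C \<inter> (\<Union>\<alpha>\<in>\<theta>. {v. \<alpha> \<bullet> v = 0}) = {0}"

end

theory Submission
  imports Defs
begin

definition isom :: "('a::euclidean_space \<Rightarrow> 'a) \<Rightarrow> bool" where
  "isom f \<longleftrightarrow> linear f \<and> (\<forall>x y. f x \<bullet> f y = x \<bullet> y)"

lemma refl_linear: "linear (refl a)"
  unfolding refl_def
  by (rule linearI) (simp_all add: inner_add_right add_divide_distrib scaleR_add_left algebra_simps)

lemma refl_inner:
  assumes "a \<noteq> 0" shows "refl a x \<bullet> refl a y = x \<bullet> y"
proof -
  have aa: "a \<bullet> a \<noteq> 0" using assms by simp
  show ?thesis unfolding refl_def
    using aa by (simp add: inner_diff_left inner_diff_right algebra_simps inner_commute)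
qed

lemma refl_isom: "a \<noteq> 0 \<Longrightarrow> isom (refl a)"
  by (simp add: isom_def refl_linear refl_inner)

lemma refl_refl: assumes "a \<noteq> 0" shows "refl a (refl a x) = x"
proof -
  have aa: "a \<bullet> a \<noteq> 0" using assms by simp
  show ?thesis unfolding refl_def using aa
    by (simp add: inner_diff_right algebra_simps)
qed

lemma refl_refl_comp: "a \<noteq> 0 \<Longrightarrow> refl a \<circ> refl a = id"
  by (auto simp: refl_refl)

lemma refl_self: assumes "a \<noteq> 0" shows "refl a a = - a"
proof -
  have aa: "a \<bullet> a \<noteq> 0" using assms by simp
  show ?thesis unfolding refl_def using aa by (simp add: algebra_simps scaleR_2)
qed

lemma refl_scale: assumes "c \<noteq> 0" shows "refl (c *\<^sub>R a) = refl a"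
proof
  fix x
  show "refl (c *\<^sub>R a) x = refl a x"
  proof (cases "a = 0")
    case True then show ?thesis by (simp add: refl_def)
  next
    case False
    then have aa: "a \<bullet> a \<noteq> 0" by simp
    show ?thesis unfolding refl_def using aa assms
      by (simp add: field_simps power2_eq_square)
  qed
qed

lemma refl_fix: "a \<bullet> x = 0 \<Longrightarrow> refl a x = x"
  by (simp add: refl_def)

lemma refl_inner_h: "refl a x \<bullet> h = x \<bullet> h - (2 * (a \<bullet> x) / (a \<bullet> a)) * (a \<bullet> h)"
  by (simp add: refl_def inner_diff_left)

lemma isom_linear: "isom f \<Longrightarrow> linear f" by (simp add: isom_def)
lemma isom_inner: "isom f \<Longrightarrow> f x \<bullet> f y = x \<bullet> y" by (simp add: isom_def)

lemma isom_inj: assumes "isom f" shows "inj f"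
proof (rule injI)
  fix x y assume "f x = f y"
  then have "f (x - y) = 0" using isom_linear[OF assms] by (simp add: linear_diff)
  then have "(x - y) \<bullet> (x - y) = 0" using isom_inner[OF assms, of "x-y" "x-y"] by simp
  then show "x = y" by simp
qed

lemma isom_comp: "isom f \<Longrightarrow> isom g \<Longrightarrow> isom (f \<circ> g)"
  by (simp add: isom_def linear_compose)

lemma isom_id: "isom id" by (simp add: isom_def linear_id)

lemma isom_conj:
  assumes "isom f" shows "f (refl b x) = refl (f b) (f x)"
proof -
  have l: "linear f" using assms isom_linear by auto
  show ?thesis unfolding refl_def
    by (simp add: linear_diff[OF l] linear_scale[OF l] isom_inner[OF assms])
qed

lemma isom_conj_comp:
  assumes "isom f" shows "f \<circ> refl b = refl (f b) \<circ> f"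
  using isom_conj[OF assms] by auto

primrec wprod :: "'a::euclidean_space list \<Rightarrow> 'a \<Rightarrow> 'a" where
  "wprod [] = id"
| "wprod (a # as) = refl a \<circ> wprod as"

lemma wprod_append: "wprod (xs @ ys) = wprod xs \<circ> wprod ys"
  by (induction xs) (auto simp: comp_assoc)

lemma wprod_isom: "0 \<notin> set as \<Longrightarrow> isom (wprod as)"
  by (induction as) (auto intro: isom_comp refl_isom simp: isom_id)

lemma wprod_rev: "0 \<notin> set as \<Longrightarrow> wprod (rev as) \<circ> wprod as = id"
proof (induction as)
  case Nil then show ?case by simp
next
  case (Cons a as)
  have "wprod (rev (a # as)) \<circ> wprod (a # as) = wprod (rev as) \<circ> (refl a \<circ> refl a) \<circ> wprod as"
    by (simp add: wprod_append comp_assoc)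
  also have "\<dots> = id" using Cons by (simp add: refl_refl comp_def fun_eq_iff)
  finally show ?case .
qed

lemma wprod_rev2: "0 \<notin> set as \<Longrightarrow> wprod as \<circ> wprod (rev as) = id"
  using wprod_rev[of "rev as"] by simp



lemma dual_exists:
  fixes B :: "'a::euclidean_space set"
  assumes "independent B" shows "\<exists>x. \<forall>b\<in>B. b \<bullet> x = f b"
proof -
  obtain g :: "'a \<Rightarrow> real" where g: "linear g" "\<forall>x\<in>B. g x = f x"
    using linear_independent_extend[OF assms] by blast
  show ?thesis
    by (rule exI[of _ "adjoint g 1"]) (simp add: adjoint_works[OF g(1)] g(2))
qed

lemma finite_max:
  fixes f :: "'b \<Rightarrow> real"
  assumes "finite S" "S \<noteq> {}" shows "\<exists>x\<in>S. \<forall>y\<in>S. f y \<le> f x"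
proof -
  have "Max (f ` S) \<in> f ` S" using assms by simp
  then obtain x where "x \<in> S" "f x = Max (f ` S)" by auto
  then show ?thesis using assms by (metis Max_ge finite_imageI image_eqI)
qed

locale rs =
  fixes R :: "'a::euclidean_space set" and \<Delta> :: "'a set"
  assumes RS: "root_system R" and BS: "is_base R \<Delta>"
begin

lemma finR: "finite R" and R0: "0 \<notin> R" and spanR: "span R = UNIV"
  and reflR: "\<And>a b. a \<in> R \<Longrightarrow> b \<in> R \<Longrightarrow> refl a b \<in> R"
  using RS unfolding root_system_def by blast+

lemma DR: "\<Delta> \<subseteq> R" and indD: "independent \<Delta>"
  and baseD: "\<And>\<beta>. \<beta> \<in> R \<Longrightarrow> \<exists>c. \<beta> = (\<Sum>\<alpha>\<in>\<Delta>. c \<alpha> *\<^sub>R \<alpha>) \<and>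
        ((\<forall>\<alpha>\<in>\<Delta>. c \<alpha> \<ge> 0) \<or> (\<forall>\<alpha>\<in>\<Delta>. c \<alpha> \<le> 0))"
  using BS unfolding is_base_def by blast+

lemma finD: "finite \<Delta>" using DR finR finite_subset by auto

lemma root_nz: "\<beta> \<in> R \<Longrightarrow> \<beta> \<noteq> 0" using R0 by auto
lemma D_nz: "\<alpha> \<in> \<Delta> \<Longrightarrow> \<alpha> \<noteq> 0" using R0 DR by auto

lemma neg_root: "\<beta> \<in> R \<Longrightarrow> - \<beta> \<in> R"
  using reflR[of \<beta> \<beta>] refl_self[of \<beta>] root_nz by auto

lemma spanD: "span \<Delta> = UNIV"
proof -
  have "R \<subseteq> span \<Delta>"
  proof
    fix \<beta> assume "\<beta> \<in> R"
    then obtain c where "\<beta> = (\<Sum>\<alpha>\<in>\<Delta>. c \<alpha> *\<^sub>R \<alpha>)" using baseD by blast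
    then show "\<beta> \<in> span \<Delta>" by (simp add: span_sum span_scale span_base)
  qed
  then have "span R \<subseteq> span \<Delta>" by (simp add: span_minimal)
  then show ?thesis using spanR by auto
qed

definition om :: "'a \<Rightarrow> 'a" where
  "om \<delta> = (SOME x. \<forall>\<alpha>\<in>\<Delta>. \<alpha> \<bullet> x = (if \<alpha> = \<delta> then 1 else 0))"

definition hh :: 'a where
  "hh = (SOME x. \<forall>\<alpha>\<in>\<Delta>. \<alpha> \<bullet> x = 1)"

lemma om: assumes "\<alpha> \<in> \<Delta>" shows "\<alpha> \<bullet> om \<delta> = (if \<alpha> = \<delta> then 1 else 0)"
proof -
  have ex: "\<exists>x. \<forall>\<alpha>\<in>\<Delta>. \<alpha> \<bullet> x = (if \<alpha> = \<delta> then 1 else 0)"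
    using dual_exists[OF indD, of "\<lambda>\<alpha>. if \<alpha> = \<delta> then 1 else 0"] by simp
  show ?thesis unfolding om_def using someI_ex[OF ex] assms by blast
qed

lemma hh: assumes "\<alpha> \<in> \<Delta>" shows "\<alpha> \<bullet> hh = 1"
proof -
  have ex: "\<exists>x. \<forall>\<alpha>\<in>\<Delta>. \<alpha> \<bullet> x = 1"
    using dual_exists[OF indD, of "\<lambda>_. 1"] by simp
  show ?thesis unfolding hh_def using someI_ex[OF ex] assms by blast
qed

lemma coef_sum: assumes "\<delta> \<in> \<Delta>" shows "(\<Sum>v\<in>\<Delta>. u v *\<^sub>R v) \<bullet> om \<delta> = u \<delta>"
proof -
  have "(\<Sum>v\<in>\<Delta>. u v *\<^sub>R v) \<bullet> om \<delta> = (\<Sum>v\<in>\<Delta>. u v * (v \<bullet> om \<delta>))"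
    by (simp add: inner_sum_left)
  also have "\<dots> = (\<Sum>v\<in>\<Delta>. if v = \<delta> then u v else 0)"
    by (rule sum.cong) (simp_all add: om)
  also have "\<dots> = u \<delta>" using assms finD by simp
  finally show ?thesis .
qed

lemma repr: "x = (\<Sum>\<delta>\<in>\<Delta>. (x \<bullet> om \<delta>) *\<^sub>R \<delta>)"
proof -
  have "x \<in> span \<Delta>" using spanD by auto
  then obtain u where u: "x = (\<Sum>v\<in>\<Delta>. u v *\<^sub>R v)"
    using span_finite[OF finD] by auto
  have c: "x \<bullet> om \<delta> = u \<delta>" if "\<delta> \<in> \<Delta>" for \<delta>
    unfolding u by (rule coef_sum[OF that])
  have "(\<Sum>\<delta>\<in>\<Delta>. (x \<bullet> om \<delta>) *\<^sub>R \<delta>) = (\<Sum>v\<in>\<Delta>. u v *\<^sub>R v)"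
    by (rule sum.cong) (simp_all add: c)
  then show ?thesis using u by simp
qed

lemma repr': "(\<Sum>\<delta>\<in>\<Delta>. (x \<bullet> om \<delta>) *\<^sub>R \<delta>) = x"
  using repr[of x] by (rule sym)

lemma inner_expand: "x \<bullet> y = (\<Sum>\<delta>\<in>\<Delta>. (x \<bullet> om \<delta>) * (\<delta> \<bullet> y))"
proof -
  have "x \<bullet> y = (\<Sum>\<delta>\<in>\<Delta>. (x \<bullet> om \<delta>) *\<^sub>R \<delta>) \<bullet> y" by (simp only: repr')
  also have "\<dots> = (\<Sum>\<delta>\<in>\<Delta>. (x \<bullet> om \<delta>) * (\<delta> \<bullet> y))" by (simp add: inner_sum_left)
  finally show ?thesis .
qed

lemma height: "x \<bullet> hh = (\<Sum>\<delta>\<in>\<Delta>. x \<bullet> om \<delta>)"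
  using inner_expand[of x hh] by (simp add: hh)

lemma inner_zero_D: "(\<And>\<alpha>. \<alpha> \<in> \<Delta> \<Longrightarrow> \<alpha> \<bullet> x = 0) \<Longrightarrow> x = 0"
  using inner_expand[of x x] by (simp add: inner_commute)

lemma eq_by_D: "(\<And>\<alpha>. \<alpha> \<in> \<Delta> \<Longrightarrow> \<alpha> \<bullet> x = \<alpha> \<bullet> y) \<Longrightarrow> x = y"
  using inner_zero_D[of "x - y"] by (simp add: inner_diff_right)

lemma root_sign: "\<beta> \<in> R \<Longrightarrow> (\<forall>\<delta>\<in>\<Delta>. 0 \<le> \<beta> \<bullet> om \<delta>) \<or> (\<forall>\<delta>\<in>\<Delta>. \<beta> \<bullet> om \<delta> \<le> 0)"
proof -
  assume "\<beta> \<in> R"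
  then obtain c where c: "\<beta> = (\<Sum>\<alpha>\<in>\<Delta>. c \<alpha> *\<^sub>R \<alpha>)" "(\<forall>\<alpha>\<in>\<Delta>. c \<alpha> \<ge> 0) \<or> (\<forall>\<alpha>\<in>\<Delta>. c \<alpha> \<le> 0)"
    using baseD by blast
  have "\<And>\<delta>. \<delta> \<in> \<Delta> \<Longrightarrow> \<beta> \<bullet> om \<delta> = c \<delta>" using c(1) coef_sum by simp
  then show ?thesis using c(2) by auto
qed

lemma zero_by_coef: assumes "\<And>\<delta>. \<delta> \<in> \<Delta> \<Longrightarrow> x \<bullet> om \<delta> = 0" shows "x = 0"
proof -
  have "x = (\<Sum>\<delta>\<in>\<Delta>. (x \<bullet> om \<delta>) *\<^sub>R \<delta>)" by (rule repr)
  also have "\<dots> = 0" using assms by simp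
  finally show ?thesis .
qed

lemma root_h_pos: assumes "\<beta> \<in> R" "\<forall>\<delta>\<in>\<Delta>. 0 \<le> \<beta> \<bullet> om \<delta>" shows "\<beta> \<bullet> hh > 0"
proof -
  have "\<beta> \<bullet> hh \<ge> 0" using assms(2) height by (simp add: sum_nonneg)
  moreover have "\<beta> \<bullet> hh \<noteq> 0"
  proof
    assume "\<beta> \<bullet> hh = 0"
    then have "(\<Sum>\<delta>\<in>\<Delta>. \<beta> \<bullet> om \<delta>) = 0" by (simp add: height)
    then have "\<forall>\<delta>\<in>\<Delta>. \<beta> \<bullet> om \<delta> = 0" using assms(2) sum_nonneg_eq_0_iff[OF finD, of "\<lambda>\<delta>. \<beta> \<bullet> om \<delta>"] by blast
    then have "\<beta> = 0" using zero_by_coef by auto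
    then show False using assms root_nz by auto
  qed
  ultimately show ?thesis by auto
qed

lemma root_h_neg: assumes "\<beta> \<in> R" "\<forall>\<delta>\<in>\<Delta>. \<beta> \<bullet> om \<delta> \<le> 0" shows "\<beta> \<bullet> hh < 0"
proof -
  have "- \<beta> \<in> R" using neg_root assms by auto
  moreover have "\<forall>\<delta>\<in>\<Delta>. 0 \<le> (-\<beta>) \<bullet> om \<delta>" using assms by auto
  ultimately have "(-\<beta>) \<bullet> hh > 0" by (rule root_h_pos)
  then show ?thesis by simp
qed

lemma root_h_nz: assumes "\<beta> \<in> R" shows "\<beta> \<bullet> hh \<noteq> 0"
proof (cases "\<forall>\<delta>\<in>\<Delta>. 0 \<le> \<beta> \<bullet> om \<delta>")
  case True then show ?thesis using root_h_pos[OF assms] by force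
next
  case False then show ?thesis using root_sign[OF assms] root_h_neg[OF assms] by force
qed

lemma pos_coef: assumes "\<beta> \<in> R" "\<beta> \<bullet> hh > 0" "\<delta> \<in> \<Delta>" shows "0 \<le> \<beta> \<bullet> om \<delta>"
proof (cases "\<forall>\<delta>\<in>\<Delta>. 0 \<le> \<beta> \<bullet> om \<delta>")
  case True then show ?thesis using assms by blast
next
  case False then have "\<beta> \<bullet> hh < 0" using root_sign[OF assms(1)] root_h_neg[OF assms(1)] by blast
  then show ?thesis using assms by simp
qed

lemma neg_coef: assumes "\<beta> \<in> R" "\<beta> \<bullet> hh < 0" "\<delta> \<in> \<Delta>" shows "\<beta> \<bullet> om \<delta> \<le> 0"
proof (cases "\<forall>\<delta>\<in>\<Delta>. \<beta> \<bullet> om \<delta> \<le> 0")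
  case True then show ?thesis using assms by blast
next
  case False then have "\<beta> \<bullet> hh > 0" using root_sign[OF assms(1)] root_h_pos[OF assms(1)] by blast
  then show ?thesis using assms by simp
qed

lemma chamberD: "u \<in> chamber \<Delta> \<Longrightarrow> \<alpha> \<in> \<Delta> \<Longrightarrow> 0 \<le> \<alpha> \<bullet> u"
  by (simp add: chamber_def)

lemma coef_nonneg_chamber:
  assumes "\<forall>\<delta>\<in>\<Delta>. 0 \<le> x \<bullet> om \<delta>" "u \<in> chamber \<Delta>" shows "0 \<le> x \<bullet> u"
  using inner_expand[of x u] assms chamberD by (simp add: sum_nonneg)

lemma pos_root_chamber: "\<beta> \<in> R \<Longrightarrow> \<beta> \<bullet> hh > 0 \<Longrightarrow> u \<in> chamber \<Delta> \<Longrightarrow> 0 \<le> \<beta> \<bullet> u"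
  using coef_nonneg_chamber pos_coef by blast

lemma neg_root_chamber: "\<beta> \<in> R \<Longrightarrow> \<beta> \<bullet> hh < 0 \<Longrightarrow> u \<in> chamber \<Delta> \<Longrightarrow> \<beta> \<bullet> u \<le> 0"
  using pos_root_chamber[of "-\<beta>" u] neg_root by auto

lemma hh_chamber: "hh \<in> chamber \<Delta>" by (simp add: chamber_def hh)

lemma om_chamber: "om \<delta> \<in> chamber \<Delta>" by (simp add: chamber_def om)


lemma weyl_isom: "w \<in> weyl R \<Longrightarrow> isom w"
proof (induction rule: weyl.induct)
  case weyl_id then show ?case by (rule isom_id)
next
  case (weyl_step \<alpha> w) then show ?case using isom_comp refl_isom root_nz by blast
qed

lemma weyl_linear: "w \<in> weyl R \<Longrightarrow> linear w"
  using weyl_isom isom_linear by blast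

lemma weyl_maps: "w \<in> weyl R \<Longrightarrow> \<beta> \<in> R \<Longrightarrow> w \<beta> \<in> R"
  by (induction rule: weyl.induct) (auto intro: reflR)

lemma weyl_comp: "w1 \<in> weyl R \<Longrightarrow> w2 \<in> weyl R \<Longrightarrow> w1 \<circ> w2 \<in> weyl R"
proof (induction rule: weyl.induct)
  case weyl_id then show ?case by simp
next
  case (weyl_step \<alpha> w)
  have "w \<circ> w2 \<in> weyl R" using weyl_step.IH weyl_step.prems by blast
  then have "refl \<alpha> \<circ> (w \<circ> w2) \<in> weyl R" by (rule weyl.weyl_step[OF weyl_step.hyps(1)])
  then show ?case by (simp only: comp_assoc)
qed

lemma refl_weyl: "a \<in> R \<Longrightarrow> refl a \<in> weyl R"
  using weyl.weyl_step[OF _ weyl.weyl_id, of a R] by simp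

lemma weyl_inv: "w \<in> weyl R \<Longrightarrow> \<exists>w'\<in>weyl R. w' \<circ> w = id \<and> w \<circ> w' = id"
proof (induction rule: weyl.induct)
  case weyl_id
  have "id \<circ> id = id" by simp
  then show ?case using weyl.weyl_id by blast
next
  case (weyl_step \<alpha> w)
  then obtain w' where w': "w' \<in> weyl R" "w' \<circ> w = id" "w \<circ> w' = id" by blast
  have a0: "\<alpha> \<noteq> 0" using weyl_step root_nz by auto
  have inW: "w' \<circ> refl \<alpha> \<in> weyl R" using weyl_comp[OF w'(1) refl_weyl] weyl_step.hyps(1) by blast
  have p1: "\<And>x. w' (w x) = x" using fun_cong[OF w'(2)] by simp
  have p2: "\<And>x. w (w' x) = x" using fun_cong[OF w'(3)] by simp
  have "(w' \<circ> refl \<alpha>) \<circ> (refl \<alpha> \<circ> w) = id"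
    using a0 by (simp add: fun_eq_iff refl_refl p1)
  moreover have "(refl \<alpha> \<circ> w) \<circ> (w' \<circ> refl \<alpha>) = id"
    using a0 by (simp add: fun_eq_iff refl_refl p2)
  ultimately show ?case using inW by blast
qed

lemma wprod_weyl: "set as \<subseteq> R \<Longrightarrow> wprod as \<in> weyl R"
proof (induction as)
  case Nil then show ?case using weyl.weyl_id by (simp only: wprod.simps)
next
  case (Cons a as)
  then have "a \<in> R" "wprod as \<in> weyl R" by auto
  then show ?case unfolding wprod.simps by (rule weyl.weyl_step)
qed

lemma linear_eq_R: assumes "linear f" "linear g" "\<And>x. x \<in> R \<Longrightarrow> f x = g x" shows "f = g"
proof
  fix x
  have "x \<in> span R" using spanR by simp
  then show "f x = g x" by (rule linear_eq_on[OF assms(1,2)]) (rule assms(3))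
qed

lemma weyl_finite: "finite (weyl R)"
proof -
  have inj: "inj_on (\<lambda>w. restrict w R) (weyl R)"
  proof (rule inj_onI)
    fix w1 w2 assume w: "w1 \<in> weyl R" "w2 \<in> weyl R" and eq: "restrict w1 R = restrict w2 R"
    have "w1 x = w2 x" if x: "x \<in> R" for x
    proof -
      have "restrict w1 R x = restrict w2 R x" using eq by simp
      then show ?thesis using x by simp
    qed
    then show "w1 = w2" by (rule linear_eq_R[OF weyl_linear[OF w(1)] weyl_linear[OF w(2)]])
  qed
  have "(\<lambda>w. restrict w R) ` weyl R \<subseteq> R \<rightarrow>\<^sub>E R"
  proof (rule image_subsetI)
    fix w assume w: "w \<in> weyl R"
    show "restrict w R \<in> R \<rightarrow>\<^sub>E R" by (simp add: restrict_PiE_iff weyl_maps[OF w])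
  qed
  moreover have "finite (R \<rightarrow>\<^sub>E R)" using finR by (simp add: finite_PiE)
  ultimately have "finite ((\<lambda>w. restrict w R) ` weyl R)" by (rule finite_subset)
  then show ?thesis by (rule finite_imageD[OF _ inj])
qed

lemma fix_chamber_id:
  assumes "linear w" "\<And>u. u \<in> chamber \<Delta> \<Longrightarrow> w u = u" shows "w = id"
proof
  fix x
  define t where "t = (\<Sum>\<alpha>\<in>\<Delta>. \<bar>\<alpha> \<bullet> x\<bar>)"
  have "x + t *\<^sub>R hh \<in> chamber \<Delta>"
    unfolding chamber_def
  proof safe
    fix \<alpha> assume a: "\<alpha> \<in> \<Delta>"
    have "\<bar>\<alpha> \<bullet> x\<bar> \<le> t" unfolding t_def using a finD by (intro member_le_sum) auto
    then show "0 \<le> \<alpha> \<bullet> (x + t *\<^sub>R hh)" using a by (simp add: inner_add_right hh)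
  qed
  then have "w (x + t *\<^sub>R hh) = x + t *\<^sub>R hh" using assms(2) by blast
  moreover have "w hh = hh" using assms(2) hh_chamber by blast
  ultimately show "w x = id x" using assms(1) by (simp add: linear_add linear_scale)
qed

end


context rs
begin

lemma inner_self_pos: "\<alpha> \<in> R \<Longrightarrow> \<alpha> \<bullet> \<alpha> > 0"
  using root_nz by simp

lemma simple_obtuse:
  assumes a: "\<alpha> \<in> \<Delta>" and b: "\<beta> \<in> \<Delta>" and ne: "\<alpha> \<noteq> \<beta>" shows "\<alpha> \<bullet> \<beta> \<le> 0"
proof (rule ccontr)
  assume "\<not> \<alpha> \<bullet> \<beta> \<le> 0"
  then have pos: "\<alpha> \<bullet> \<beta> > 0" by simp
  define k where "k = 2 * (\<alpha> \<bullet> \<beta>) / (\<alpha> \<bullet> \<alpha>)"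
  have aa: "\<alpha> \<bullet> \<alpha> > 0" using inner_self_pos a DR by auto
  have k: "k > 0" unfolding k_def using pos aa by simp
  have g: "refl \<alpha> \<beta> \<in> R" using reflR a b DR by auto
  have eq: "refl \<alpha> \<beta> = \<beta> - k *\<^sub>R \<alpha>" by (simp add: refl_def k_def)
  have c1: "refl \<alpha> \<beta> \<bullet> om \<beta> = 1" unfolding eq using a b ne by (simp add: inner_diff_left om)
  have c2: "refl \<alpha> \<beta> \<bullet> om \<alpha> = - k" unfolding eq using a b ne by (simp add: inner_diff_left om)
  show False using root_sign[OF g] c1 c2 k a b by force
qed

lemma coef_single:
  assumes a: "\<alpha> \<in> \<Delta>" and z: "\<And>\<delta>. \<delta> \<in> \<Delta> \<Longrightarrow> \<delta> \<noteq> \<alpha> \<Longrightarrow> x \<bullet> om \<delta> = 0"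
  shows "x = (x \<bullet> om \<alpha>) *\<^sub>R \<alpha>"
proof -
  have "x = (\<Sum>\<delta>\<in>\<Delta>. (x \<bullet> om \<delta>) *\<^sub>R \<delta>)" by (rule repr)
  also have "\<dots> = (\<Sum>\<delta>\<in>\<Delta>. if \<delta> = \<alpha> then (x \<bullet> om \<alpha>) *\<^sub>R \<alpha> else 0)"
    by (rule sum.cong) (auto simp: z)
  also have "\<dots> = (x \<bullet> om \<alpha>) *\<^sub>R \<alpha>" using a finD by simp
  finally show ?thesis .
qed

lemma pos_refl:
  assumes a: "\<alpha> \<in> \<Delta>" and b: "\<beta> \<in> R" and bp: "\<beta> \<bullet> hh > 0" and np: "\<And>c. \<beta> \<noteq> c *\<^sub>R \<alpha>"
  shows "refl \<alpha> \<beta> \<bullet> hh > 0"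
proof -
  obtain \<gamma> where g: "\<gamma> \<in> \<Delta>" "\<gamma> \<noteq> \<alpha>" "\<beta> \<bullet> om \<gamma> > 0"
  proof (rule ccontr)
    assume "\<not> thesis"
    then have "\<And>\<gamma>. \<gamma> \<in> \<Delta> \<Longrightarrow> \<gamma> \<noteq> \<alpha> \<Longrightarrow> \<beta> \<bullet> om \<gamma> = 0"
      using that pos_coef[OF b bp] by force
    then have "\<beta> = (\<beta> \<bullet> om \<alpha>) *\<^sub>R \<alpha>" using coef_single[OF a] by blast
    then show False using np by blast
  qed
  have r: "refl \<alpha> \<beta> \<in> R" using reflR a b DR by auto
  have "refl \<alpha> \<beta> \<bullet> om \<gamma> = \<beta> \<bullet> om \<gamma>"
    using g a by (simp add: refl_def inner_diff_left om)
  then have "refl \<alpha> \<beta> \<bullet> om \<gamma> > 0" using g by simp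
  then have "\<forall>\<delta>\<in>\<Delta>. 0 \<le> refl \<alpha> \<beta> \<bullet> om \<delta>" using root_sign[OF r] g(1) by force
  then show ?thesis by (rule root_h_pos[OF r])
qed

lemma refl_neg: "\<beta> \<noteq> 0 \<Longrightarrow> refl (- \<beta>) = refl \<beta>"
  using refl_scale[of "-1" \<beta>] by simp

lemma pos_root_conj:
  "\<beta> \<in> R \<Longrightarrow> \<beta> \<bullet> hh > 0 \<Longrightarrow>
     \<exists>ls \<alpha> c. set ls \<subseteq> \<Delta> \<and> \<alpha> \<in> \<Delta> \<and> c \<noteq> 0 \<and> \<beta> = wprod ls (c *\<^sub>R \<alpha>)"
proof (induction "card {\<gamma>\<in>R. \<gamma> \<bullet> hh < \<beta> \<bullet> hh}" arbitrary: \<beta> rule: less_induct)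
  case less
  show ?case
  proof (cases "\<exists>\<alpha>\<in>\<Delta>. \<exists>c. \<beta> = c *\<^sub>R \<alpha>")
    case True
    then obtain \<alpha> c where ac: "\<alpha> \<in> \<Delta>" "\<beta> = c *\<^sub>R \<alpha>" by blast
    have "c \<noteq> 0" using ac root_nz less.prems by auto
    then have "set [] \<subseteq> \<Delta> \<and> \<alpha> \<in> \<Delta> \<and> c \<noteq> 0 \<and> \<beta> = wprod [] (c *\<^sub>R \<alpha>)" using ac by simp
    then show ?thesis by blast
  next
    case False
    have bb: "\<beta> \<bullet> \<beta> > 0" using inner_self_pos less.prems by auto
    have "\<exists>\<alpha>\<in>\<Delta>. \<alpha> \<bullet> \<beta> > 0"
    proof (rule ccontr)
      assume "\<not> (\<exists>\<alpha>\<in>\<Delta>. \<alpha> \<bullet> \<beta> > 0)"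
      then have n: "\<And>\<delta>. \<delta> \<in> \<Delta> \<Longrightarrow> \<delta> \<bullet> \<beta> \<le> 0" by (simp add: not_less)
      have "\<And>\<delta>. \<delta> \<in> \<Delta> \<Longrightarrow> (\<beta> \<bullet> om \<delta>) * (\<delta> \<bullet> \<beta>) \<le> 0"
        by (rule mult_nonneg_nonpos[OF pos_coef[OF less.prems] n])
      then have "(\<Sum>\<delta>\<in>\<Delta>. (\<beta> \<bullet> om \<delta>) * (\<delta> \<bullet> \<beta>)) \<le> 0" by (rule sum_nonpos)
      then show False using bb inner_expand[of \<beta> \<beta>] by simp
    qed
    then obtain \<alpha> where a: "\<alpha> \<in> \<Delta>" "\<alpha> \<bullet> \<beta> > 0" by blast
    define k where "k = 2 * (\<alpha> \<bullet> \<beta>) / (\<alpha> \<bullet> \<alpha>)"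
    have aa: "\<alpha> \<bullet> \<alpha> > 0" using inner_self_pos a DR by auto
    have k: "k > 0" unfolding k_def using a aa by simp
    define \<beta>' where "\<beta>' = refl \<alpha> \<beta>"
    have b'R: "\<beta>' \<in> R" unfolding \<beta>'_def using reflR a less.prems DR by auto
    have b'p: "\<beta>' \<bullet> hh > 0" unfolding \<beta>'_def
      using pos_refl[OF a(1) less.prems] False a(1) by blast
    have b'h: "\<beta>' \<bullet> hh = \<beta> \<bullet> hh - k" unfolding \<beta>'_def k_def
      using a by (simp add: refl_inner_h hh)
    have sub: "{\<gamma>\<in>R. \<gamma> \<bullet> hh < \<beta>' \<bullet> hh} \<subset> {\<gamma>\<in>R. \<gamma> \<bullet> hh < \<beta> \<bullet> hh}"
    proof
      show "{\<gamma>\<in>R. \<gamma> \<bullet> hh < \<beta>' \<bullet> hh} \<subseteq> {\<gamma>\<in>R. \<gamma> \<bullet> hh < \<beta> \<bullet> hh}"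
        using b'h k by auto
      have "\<beta>' \<in> {\<gamma>\<in>R. \<gamma> \<bullet> hh < \<beta> \<bullet> hh}" using b'h k b'R by simp
      moreover have "\<beta>' \<notin> {\<gamma>\<in>R. \<gamma> \<bullet> hh < \<beta>' \<bullet> hh}" by simp
      ultimately show "{\<gamma>\<in>R. \<gamma> \<bullet> hh < \<beta>' \<bullet> hh} \<noteq> {\<gamma>\<in>R. \<gamma> \<bullet> hh < \<beta> \<bullet> hh}" by blast
    qed
    have cl: "card {\<gamma>\<in>R. \<gamma> \<bullet> hh < \<beta>' \<bullet> hh} < card {\<gamma>\<in>R. \<gamma> \<bullet> hh < \<beta> \<bullet> hh}"
      by (rule psubset_card_mono[OF _ sub]) (simp add: finR)
    have "\<exists>ls \<alpha> c. set ls \<subseteq> \<Delta> \<and> \<alpha> \<in> \<Delta> \<and> c \<noteq> 0 \<and> \<beta>' = wprod ls (c *\<^sub>R \<alpha>)"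
      by (rule less.hyps[OF cl b'R b'p])
    then obtain ls \<alpha>' c where ih: "set ls \<subseteq> \<Delta>" "\<alpha>' \<in> \<Delta>" "c \<noteq> 0" "\<beta>' = wprod ls (c *\<^sub>R \<alpha>')"
      by blast
    have "\<beta> = refl \<alpha> \<beta>'" unfolding \<beta>'_def using D_nz a by (simp add: refl_refl)
    then have "\<beta> = wprod (\<alpha> # ls) (c *\<^sub>R \<alpha>')" using ih by simp
    moreover have "set (\<alpha> # ls) \<subseteq> \<Delta>" using ih(1) a(1) by simp
    ultimately show ?thesis using ih(2,3) by blast
  qed
qed

lemma refl_wprod_pos:
  assumes b: "\<beta> \<in> R" "\<beta> \<bullet> hh > 0" shows "\<exists>ls. set ls \<subseteq> \<Delta> \<and> refl \<beta> = wprod ls"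
proof -
  obtain ls \<alpha> c where c: "set ls \<subseteq> \<Delta>" "\<alpha> \<in> \<Delta>" "c \<noteq> 0" "\<beta> = wprod ls (c *\<^sub>R \<alpha>)"
    using pos_root_conj[OF b] by blast
  define v where "v = wprod ls"
  have z: "0 \<notin> set ls" using c(1) D_nz by auto
  have iv: "isom v" unfolding v_def using wprod_isom[OF z] .
  have bv: "\<beta> = c *\<^sub>R v \<alpha>" using c(4) linear_scale[OF isom_linear[OF iv]] unfolding v_def by simp
  have rb: "refl \<beta> = refl (v \<alpha>)" unfolding bv by (rule refl_scale[OF c(3)])
  have vinv: "\<And>x. v (wprod (rev ls) x) = x" using fun_cong[OF wprod_rev2[OF z]] unfolding v_def by simp
  have "refl \<beta> = wprod (ls @ \<alpha> # rev ls)"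
  proof
    fix x
    have "refl \<beta> x = refl (v \<alpha>) (v (wprod (rev ls) x))" using rb vinv by simp
    also have "\<dots> = v (refl \<alpha> (wprod (rev ls) x))" using isom_conj[OF iv] by simp
    also have "\<dots> = wprod (ls @ \<alpha> # rev ls) x" unfolding v_def by (simp add: wprod_append)
    finally show "refl \<beta> x = wprod (ls @ \<alpha> # rev ls) x" .
  qed
  then show ?thesis using c(1,2) by (intro exI[of _ "ls @ \<alpha> # rev ls"]) auto
qed

lemma refl_wprod:
  assumes b: "\<beta> \<in> R" shows "\<exists>ls. set ls \<subseteq> \<Delta> \<and> refl \<beta> = wprod ls"
proof (cases "\<beta> \<bullet> hh > 0")
  case True then show ?thesis using refl_wprod_pos[OF b] by blast
next
  case False
  then have "(- \<beta>) \<bullet> hh > 0" using root_h_nz[OF b] by auto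
  moreover have "- \<beta> \<in> R" using neg_root[OF b] .
  ultimately obtain ls where "set ls \<subseteq> \<Delta>" "refl (- \<beta>) = wprod ls" using refl_wprod_pos by blast
  then show ?thesis using refl_neg[OF root_nz[OF b]] by (intro exI[of _ ls]) simp
qed

lemma weyl_gen: "w \<in> weyl R \<Longrightarrow> \<exists>ls. set ls \<subseteq> \<Delta> \<and> w = wprod ls"
proof (induction rule: weyl.induct)
  case weyl_id
  have "set [] \<subseteq> \<Delta> \<and> id = wprod []" by simp
  then show ?case by blast
next
  case (weyl_step \<beta> w)
  obtain ls where ls: "set ls \<subseteq> \<Delta>" "w = wprod ls" using weyl_step.IH by blast
  obtain ls' where ls': "set ls' \<subseteq> \<Delta>" "refl \<beta> = wprod ls'" using refl_wprod[OF weyl_step.hyps(1)] by blast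
  have "set (ls' @ ls) \<subseteq> \<Delta> \<and> refl \<beta> \<circ> w = wprod (ls' @ ls)" using ls ls' by (simp add: wprod_append)
  then show ?case by blast
qed

lemma wprod_R: "set as \<subseteq> \<Delta> \<Longrightarrow> \<beta> \<in> R \<Longrightarrow> wprod as \<beta> \<in> R"
  using wprod_weyl[of as] weyl_maps DR by blast

lemma exchange:
  "set as \<subseteq> \<Delta> \<Longrightarrow> \<beta> \<in> R \<Longrightarrow> \<beta> \<bullet> hh > 0 \<Longrightarrow> wprod as \<beta> \<bullet> hh < 0 \<Longrightarrow>
    \<exists>as'. set as' \<subseteq> \<Delta> \<and> length as' + 1 = length as \<and> wprod as \<circ> refl \<beta> = wprod as'"
proof (induction as)
  case Nil then show ?case by simp
next
  case (Cons a as0)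
  have a: "a \<in> \<Delta>" and s0: "set as0 \<subseteq> \<Delta>" using Cons.prems by auto
  define \<gamma> where "\<gamma> = wprod as0 \<beta>"
  have gR: "\<gamma> \<in> R" unfolding \<gamma>_def using wprod_R[OF s0 Cons.prems(2)] .
  show ?case
  proof (cases "\<gamma> \<bullet> hh < 0")
    case True
    then obtain as0' where h: "set as0' \<subseteq> \<Delta>" "length as0' + 1 = length as0" "wprod as0 \<circ> refl \<beta> = wprod as0'"
      using Cons.IH[OF s0 Cons.prems(2,3)] unfolding \<gamma>_def by blast
    have "wprod (a # as0) \<circ> refl \<beta> = refl a \<circ> (wprod as0 \<circ> refl \<beta>)" by (simp only: wprod.simps comp_assoc)
    also have "\<dots> = wprod (a # as0')" using h(3) by simp
    finally have "wprod (a # as0) \<circ> refl \<beta> = wprod (a # as0')" .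
    moreover have "set (a # as0') \<subseteq> \<Delta> \<and> length (a # as0') + 1 = length (a # as0)" using h a by simp
    ultimately show ?thesis by blast
  next
    case False
    then have gp: "\<gamma> \<bullet> hh > 0" using root_h_nz[OF gR] by auto
    have "refl a \<gamma> \<bullet> hh < 0" using Cons.prems(4) unfolding \<gamma>_def by simp
    then obtain c where gc: "\<gamma> = c *\<^sub>R a" using pos_refl[OF a gR gp] by force
    have c0: "c \<noteq> 0" using gc root_nz[OF gR] by auto
    have rg: "refl \<gamma> = refl a" unfolding gc using refl_scale[OF c0] .
    have z: "0 \<notin> set as0" using s0 D_nz by auto
    have "wprod as0 \<circ> refl \<beta> = refl \<gamma> \<circ> wprod as0"
      unfolding \<gamma>_def using isom_conj_comp[OF wprod_isom[OF z]] .
    then have "wprod (a # as0) \<circ> refl \<beta> = refl a \<circ> refl a \<circ> wprod as0"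
      by (simp add: rg comp_assoc)
    also have "\<dots> = wprod as0" using D_nz[OF a] by (simp add: fun_eq_iff refl_refl)
    finally have "wprod (a # as0) \<circ> refl \<beta> = wprod as0" .
    moreover have "set as0 \<subseteq> \<Delta> \<and> length as0 + 1 = length (a # as0)" using s0 by simp
    ultimately show ?thesis by blast
  qed
qed

lemma fund_word:
  "\<forall>ls. length ls = n \<longrightarrow> set ls \<subseteq> \<Delta> \<longrightarrow>
     (\<forall>u. u \<in> chamber \<Delta> \<longrightarrow> wprod ls u \<in> chamber \<Delta> \<longrightarrow> wprod ls u = u)"
proof (induction n rule: less_induct)
  case (less n)
  show ?case
  proof (intro allI impI)
    fix ls u assume len: "length ls = n" and s: "set ls \<subseteq> \<Delta>" and u: "u \<in> chamber \<Delta>"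
      and wu: "wprod ls u \<in> chamber \<Delta>"
    show "wprod ls u = u"
    proof (cases "\<exists>ls'. set ls' \<subseteq> \<Delta> \<and> length ls' < n \<and> wprod ls' = wprod ls")
      case True
      then obtain ls' where l': "set ls' \<subseteq> \<Delta>" "length ls' < n" "wprod ls' = wprod ls" by blast
      have "\<forall>u. u \<in> chamber \<Delta> \<longrightarrow> wprod ls' u \<in> chamber \<Delta> \<longrightarrow> wprod ls' u = u"
        using less.IH[OF l'(2)] l'(1) by blast
      then show ?thesis using u wu l'(3) by simp
    next
      case nomin: False
      show ?thesis
      proof (cases ls rule: rev_exhaust)
        case Nil then show ?thesis by simp
      next
        case (snoc as \<alpha>)
        have a: "\<alpha> \<in> \<Delta>" and sa: "set as \<subseteq> \<Delta>" using s snoc by auto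
        have aR: "\<alpha> \<in> R" using a DR by auto
        have z: "0 \<notin> set ls" using s D_nz by auto
        have iw: "isom (wprod ls)" using wprod_isom[OF z] .
        have za: "0 \<notin> set as" using sa D_nz by auto
        have ls_eq: "wprod ls = wprod as \<circ> refl \<alpha>" using snoc by (simp add: wprod_append)
        have wR: "wprod ls \<alpha> \<in> R" using wprod_R[OF s aR] .
        have neg: "wprod ls \<alpha> \<bullet> hh < 0"
        proof (rule ccontr)
          assume "\<not> wprod ls \<alpha> \<bullet> hh < 0"
          then have p: "wprod ls \<alpha> \<bullet> hh > 0" using root_h_nz[OF wR] by auto
          have "wprod ls \<alpha> = - wprod as \<alpha>"
            using ls_eq refl_self[OF D_nz[OF a]] linear_neg[OF isom_linear[OF wprod_isom[OF za]]] by simp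
          then have "wprod as \<alpha> \<bullet> hh < 0" using p by simp
          moreover have "\<alpha> \<bullet> hh > 0" using hh[OF a] by simp
          ultimately obtain as' where e: "set as' \<subseteq> \<Delta>" "length as' + 1 = length as" "wprod as \<circ> refl \<alpha> = wprod as'"
            using exchange[OF sa aR] by blast
          have "length as' < n" using e(2) len snoc by simp
          moreover have "wprod as' = wprod ls" using e(3) ls_eq by simp
          ultimately show False using nomin e(1) by blast
        qed
        have "wprod ls \<alpha> \<bullet> wprod ls u \<le> 0" using neg_root_chamber[OF wR neg wu] .
        then have "\<alpha> \<bullet> u \<le> 0" using isom_inner[OF iw] by simp
        then have "\<alpha> \<bullet> u = 0" using chamberD[OF u a] by simp
        then have ru: "refl \<alpha> u = u" by (rule refl_fix)
        then have eq: "wprod ls u = wprod as u" using ls_eq by simp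
        have "length as < n" using len snoc by simp
        then have "\<forall>u. u \<in> chamber \<Delta> \<longrightarrow> wprod as u \<in> chamber \<Delta> \<longrightarrow> wprod as u = u"
          using less.IH sa by blast
        then have "wprod as u = u" using u wu eq by simp
        then show ?thesis using eq by simp
      qed
    qed
  qed
qed

lemma fundamental:
  assumes w: "w \<in> weyl R" and u: "u \<in> chamber \<Delta>" and wu: "w u \<in> chamber \<Delta>" shows "w u = u"
proof -
  obtain ls where ls: "set ls \<subseteq> \<Delta>" "w = wprod ls" using weyl_gen[OF w] by blast
  show ?thesis using fund_word[of "length ls", rule_format, OF refl ls(1) u] wu ls(2) by simp
qed

lemma stab_id: assumes w: "w \<in> weyl R" and c: "\<And>u. u \<in> chamber \<Delta> \<Longrightarrow> w u \<in> chamber \<Delta>" shows "w = id"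
  by (rule fix_chamber_id[OF weyl_linear[OF w]]) (rule fundamental[OF w _ c])

end


context rs
begin

lemma fold_max:
  assumes G: "G \<subseteq> weyl R" "id \<in> G" and cl: "\<And>\<alpha> w. \<alpha> \<in> A \<Longrightarrow> w \<in> G \<Longrightarrow> refl \<alpha> \<circ> w \<in> G"
    and A: "A \<subseteq> \<Delta>"
  shows "\<exists>w\<in>G. \<forall>\<alpha>\<in>A. 0 \<le> \<alpha> \<bullet> w v"
proof -
  have fin: "finite G" using finite_subset[OF G(1) weyl_finite] .
  obtain w where w: "w \<in> G" "\<forall>y\<in>G. y v \<bullet> hh \<le> w v \<bullet> hh"
    using finite_max[OF fin, of "\<lambda>w. w v \<bullet> hh"] G(2) by blast
  have "0 \<le> \<alpha> \<bullet> w v" if a: "\<alpha> \<in> A" for \<alpha>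
  proof -
    have aD: "\<alpha> \<in> \<Delta>" using a A by auto
    have aa: "\<alpha> \<bullet> \<alpha> > 0" using inner_self_pos aD DR by auto
    have "refl \<alpha> \<circ> w \<in> G" by (rule cl[OF a w(1)])
    then have "(refl \<alpha> \<circ> w) v \<bullet> hh \<le> w v \<bullet> hh" using w(2) by blast
    then have "refl \<alpha> (w v) \<bullet> hh \<le> w v \<bullet> hh" by simp
    then have "0 \<le> 2 * (\<alpha> \<bullet> w v) / (\<alpha> \<bullet> \<alpha>)" using hh[OF aD] by (simp add: refl_inner_h)
    then show ?thesis using aa by (simp add: zero_le_divide_iff)
  qed
  then show ?thesis using w(1) by blast
qed

lemma w0_ex: "\<exists>w\<in>weyl R. w ` chamber \<Delta> = uminus ` chamber \<Delta>"
proof -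
  have cl: "refl \<alpha> \<circ> w \<in> weyl R" if "\<alpha> \<in> \<Delta>" "w \<in> weyl R" for \<alpha> w
    using weyl.weyl_step[of \<alpha> R w] that DR by blast
  obtain w where w: "w \<in> weyl R" "\<forall>\<alpha>\<in>\<Delta>. 0 \<le> \<alpha> \<bullet> w (- hh)"
    using fold_max[of "weyl R" \<Delta> "- hh", OF subset_refl weyl.weyl_id cl subset_refl] by blast
  obtain w' where w': "w' \<in> weyl R" "w' \<circ> w = id" "w \<circ> w' = id" using weyl_inv[OF w(1)] by blast
  have iw: "isom w" using weyl_isom[OF w(1)] .
  have lw: "linear w" using isom_linear[OF iw] .
  define g where "g = (\<lambda>v. - w v)"
  have gc: "g u \<in> chamber \<Delta>" if u: "u \<in> chamber \<Delta>" for u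
    unfolding chamber_def
  proof (safe)
    fix \<alpha> assume a: "\<alpha> \<in> \<Delta>"
    have aw: "\<alpha> = w (w' \<alpha>)" using fun_cong[OF w'(3), of \<alpha>] by simp
    have e1: "\<alpha> \<bullet> w u = w' \<alpha> \<bullet> u" using isom_inner[OF iw, of "w' \<alpha>" u] aw by simp
    have w'R: "w' \<alpha> \<in> R" using weyl_maps[OF w'(1)] a DR by auto
    have "w' \<alpha> \<bullet> hh = \<alpha> \<bullet> w hh" using isom_inner[OF iw, of "w' \<alpha>" hh] aw by simp
    also have "\<dots> = - (\<alpha> \<bullet> w (- hh))" using linear_neg[OF lw, of hh] by simp
    finally have "w' \<alpha> \<bullet> hh \<le> 0" using w(2) a by simp
    then have "w' \<alpha> \<bullet> hh < 0" using root_h_nz[OF w'R] by auto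
    then have "w' \<alpha> \<bullet> u \<le> 0" using neg_root_chamber[OF w'R _ u] by blast
    then show "0 \<le> \<alpha> \<bullet> g u" unfolding g_def using e1 by simp
  qed
  have gg: "g (g u) = w (w u)" for u unfolding g_def using linear_neg[OF lw] by simp
  have "w \<circ> w = id"
  proof (rule stab_id[OF weyl_comp[OF w(1) w(1)]])
    fix u assume u: "u \<in> chamber \<Delta>"
    show "(w \<circ> w) u \<in> chamber \<Delta>" using gc[OF gc[OF u]] gg[of u] by simp
  qed
  then have ww: "w (w u) = u" for u
  proof -
    have "(w \<circ> w) u = id u" by (simp only: \<open>w \<circ> w = id\<close>)
    then show ?thesis by simp
  qed
  have "w ` chamber \<Delta> = uminus ` chamber \<Delta>"
  proof
    show "w ` chamber \<Delta> \<subseteq> uminus ` chamber \<Delta>"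
    proof
      fix x assume "x \<in> w ` chamber \<Delta>"
      then obtain u where u: "u \<in> chamber \<Delta>" "x = w u" by blast
      have "x = - g u" unfolding g_def u(2) by simp
      then show "x \<in> uminus ` chamber \<Delta>" using gc[OF u(1)] by blast
    qed
    show "uminus ` chamber \<Delta> \<subseteq> w ` chamber \<Delta>"
    proof
      fix x assume "x \<in> uminus ` chamber \<Delta>"
      then obtain u where u: "u \<in> chamber \<Delta>" "x = - u" by blast
      have "w (g u) = - w (w u)" unfolding g_def using linear_neg[OF lw] by simp
      then have "x = w (g u)" using ww u(2) by simp
      then show "x \<in> w ` chamber \<Delta>" using gc[OF u(1)] by blast
    qed
  qed
  then show ?thesis using w(1) by blast
qed

lemma w0_key:
  assumes a: "a \<in> weyl R" "a ` chamber \<Delta> = uminus ` chamber \<Delta>"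
    and b: "b \<in> weyl R" "b ` chamber \<Delta> = uminus ` chamber \<Delta>"
  shows "a \<circ> b = id"
proof (rule stab_id[OF weyl_comp[OF a(1) b(1)]])
  fix u assume u: "u \<in> chamber \<Delta>"
  have "b u \<in> uminus ` chamber \<Delta>" using b(2) u by blast
  then obtain u' where u': "u' \<in> chamber \<Delta>" "b u = - u'" by blast
  have "a u' \<in> uminus ` chamber \<Delta>" using a(2) u'(1) by blast
  then obtain u'' where u'': "u'' \<in> chamber \<Delta>" "a u' = - u''" by blast
  have "a (b u) = - a u'" using u'(2) linear_neg[OF weyl_linear[OF a(1)]] by simp
  then show "(a \<circ> b) u \<in> chamber \<Delta>" using u'' by simp
qed

lemma w0_unique:
  assumes a: "a \<in> weyl R" "a ` chamber \<Delta> = uminus ` chamber \<Delta>"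
    and b: "b \<in> weyl R" "b ` chamber \<Delta> = uminus ` chamber \<Delta>"
  shows "a = b"
proof -
  have ab: "a \<circ> b = id" by (rule w0_key[OF a b])
  have bb: "b \<circ> b = id" by (rule w0_key[OF b b])
  have "a = a \<circ> (b \<circ> b)" unfolding bb by simp
  also have "\<dots> = (a \<circ> b) \<circ> b" by (simp only: comp_assoc)
  also have "\<dots> = b" unfolding ab by simp
  finally show ?thesis .
qed

lemma w0_prop: "w0 R \<Delta> \<in> weyl R \<and> w0 R \<Delta> ` chamber \<Delta> = uminus ` chamber \<Delta>"
proof -
  have "\<exists>!w. w \<in> weyl R \<and> w ` chamber \<Delta> = uminus ` chamber \<Delta>"
  proof (rule ex_ex1I)
    show "\<exists>w. w \<in> weyl R \<and> w ` chamber \<Delta> = uminus ` chamber \<Delta>" using w0_ex by blast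
    fix x y assume "x \<in> weyl R \<and> x ` chamber \<Delta> = uminus ` chamber \<Delta>"
      "y \<in> weyl R \<and> y ` chamber \<Delta> = uminus ` chamber \<Delta>"
    then show "x = y" using w0_unique by blast
  qed
  then show ?thesis unfolding w0_def by (rule theI')
qed

lemma w0_weyl: "w0 R \<Delta> \<in> weyl R" using w0_prop by blast

lemma w0_w0: "w0 R \<Delta> (w0 R \<Delta> x) = x"
proof -
  have "w0 R \<Delta> \<circ> w0 R \<Delta> = id"
    by (rule w0_key[OF conjunct1[OF w0_prop] conjunct2[OF w0_prop] conjunct1[OF w0_prop] conjunct2[OF w0_prop]])
  then have "(w0 R \<Delta> \<circ> w0 R \<Delta>) x = id x" by (simp only:)
  then show ?thesis by simp
qed

abbreviation "opv \<equiv> opp R \<Delta>"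

lemma opp_eq: "opv v = - w0 R \<Delta> v" by (simp add: opp_def)

lemma opp_isom: "isom opv"
proof -
  have iw: "isom (w0 R \<Delta>)" using weyl_isom[OF w0_weyl] .
  have lw: "linear (w0 R \<Delta>)" using isom_linear[OF iw] .
  have "linear opv" unfolding opp_eq
    by (rule linearI) (simp_all add: linear_add[OF lw] linear_scale[OF lw])
  moreover have "opv x \<bullet> opv y = x \<bullet> y" for x y unfolding opp_eq using isom_inner[OF iw] by simp
  ultimately show ?thesis by (simp add: isom_def)
qed

lemma opp_linear: "linear opv" using opp_isom isom_linear by blast

lemma opp_opp: "opv (opv v) = v"
  unfolding opp_eq using linear_neg[OF weyl_linear[OF w0_weyl]] w0_w0 by simp

lemma opp_chamber: "u \<in> chamber \<Delta> \<Longrightarrow> opv u \<in> chamber \<Delta>"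
proof -
  assume u: "u \<in> chamber \<Delta>"
  have "w0 R \<Delta> u \<in> uminus ` chamber \<Delta>" using w0_prop u by blast
  then obtain u' where "u' \<in> chamber \<Delta>" "w0 R \<Delta> u = - u'" by blast
  then show ?thesis unfolding opp_eq by simp
qed

lemma opp_image: "opv ` chamber \<Delta> = chamber \<Delta>"
proof
  show "opv ` chamber \<Delta> \<subseteq> chamber \<Delta>" using opp_chamber by blast
  show "chamber \<Delta> \<subseteq> opv ` chamber \<Delta>"
  proof
    fix u assume "u \<in> chamber \<Delta>"
    then show "u \<in> opv ` chamber \<Delta>" by (intro image_eqI[of _ _ "opv u"]) (simp_all add: opp_opp opp_chamber)
  qed
qed

lemma opp_R: "\<beta> \<in> R \<Longrightarrow> opv \<beta> \<in> R"
  unfolding opp_eq using weyl_maps[OF w0_weyl] neg_root by blast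

lemma opp_sym: "opv x \<bullet> y = x \<bullet> opv y"
proof -
  have "opv x \<bullet> y = opv x \<bullet> opv (opv y)" by (simp add: opp_opp)
  also have "\<dots> = x \<bullet> opv y" by (rule isom_inner[OF opp_isom])
  finally show ?thesis .
qed

lemma opp_pos: assumes b: "\<beta> \<in> R" "\<beta> \<bullet> hh > 0" shows "opv \<beta> \<bullet> hh > 0"
proof -
  have "opv \<beta> \<bullet> hh = \<beta> \<bullet> opv hh" by (rule opp_sym)
  also have "\<dots> \<ge> 0" using pos_root_chamber[OF b opp_chamber[OF hh_chamber]] .
  finally show ?thesis using root_h_nz[OF opp_R[OF b(1)]] by auto
qed

lemma opp_simple:
  assumes a: "\<alpha> \<in> \<Delta>" shows "\<exists>\<gamma>\<in>\<Delta>. \<exists>c>0. opv \<alpha> = c *\<^sub>R \<gamma>"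
proof -
  define x where "x = opv \<alpha>"
  have aR: "\<alpha> \<in> R" using a DR by auto
  have ap: "\<alpha> \<bullet> hh > 0" using hh[OF a] by simp
  have xR: "x \<in> R" unfolding x_def using opp_R[OF aR] .
  have xp: "x \<bullet> hh > 0" unfolding x_def using opp_pos[OF aR ap] .
  have cx: "\<And>\<delta>. \<delta> \<in> \<Delta> \<Longrightarrow> 0 \<le> x \<bullet> om \<delta>" using pos_coef[OF xR xp] .
  have "\<exists>\<gamma>\<in>\<Delta>. x \<bullet> om \<gamma> > 0"
  proof (rule ccontr)
    assume n: "\<not> (\<exists>\<gamma>\<in>\<Delta>. x \<bullet> om \<gamma> > 0)"
    have "x \<bullet> om \<delta> = 0" if d: "\<delta> \<in> \<Delta>" for \<delta>
    proof -
      have "\<not> x \<bullet> om \<delta> > 0" using n d by blast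
      then show ?thesis using cx[OF d] by simp
    qed
    then have "x = 0" by (rule zero_by_coef)
    then show False using root_nz[OF xR] by simp
  qed
  then obtain \<gamma> where g: "\<gamma> \<in> \<Delta>" "x \<bullet> om \<gamma> > 0" by blast
  have gR: "\<gamma> \<in> R" using g DR by auto
  have gp: "\<gamma> \<bullet> hh > 0" using hh[OF g(1)] by simp
  have zero: "x \<bullet> om \<delta> = 0" if d: "\<delta> \<in> \<Delta>" "\<delta> \<noteq> \<gamma>" for \<delta>
  proof (rule ccontr)
    assume "x \<bullet> om \<delta> \<noteq> 0"
    then have dpos: "x \<bullet> om \<delta> > 0" using cx[OF d(1)] by simp
    have og0: "opv \<gamma> \<bullet> om \<epsilon> = 0" if e: "\<epsilon> \<in> \<Delta>" "\<epsilon> \<noteq> \<alpha>" for \<epsilon>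
    proof -
      have "0 = \<alpha> \<bullet> om \<epsilon>" using om[OF a, of \<epsilon>] e by simp
      also have "\<dots> = opv x \<bullet> om \<epsilon>" unfolding x_def by (simp add: opp_opp)
      also have "\<dots> = x \<bullet> opv (om \<epsilon>)" by (rule opp_sym)
      also have "\<dots> = (\<Sum>\<eta>\<in>\<Delta>. (x \<bullet> om \<eta>) * (\<eta> \<bullet> opv (om \<epsilon>)))" by (rule inner_expand)
      also have "\<dots> = (\<Sum>\<eta>\<in>\<Delta>. (x \<bullet> om \<eta>) * (opv \<eta> \<bullet> om \<epsilon>))" by (simp add: opp_sym)
      finally have s0: "(\<Sum>\<eta>\<in>\<Delta>. (x \<bullet> om \<eta>) * (opv \<eta> \<bullet> om \<epsilon>)) = 0" by simp
      have nn: "0 \<le> (x \<bullet> om \<eta>) * (opv \<eta> \<bullet> om \<epsilon>)" if h: "\<eta> \<in> \<Delta>" for \<eta>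
      proof -
        have hR: "\<eta> \<in> R" using h DR by auto
        have "opv \<eta> \<bullet> hh > 0" using opp_pos[OF hR] hh[OF h] by simp
        then have "0 \<le> opv \<eta> \<bullet> om \<epsilon>" using pos_coef[OF opp_R[OF hR] _ e(1)] by blast
        then show "0 \<le> (x \<bullet> om \<eta>) * (opv \<eta> \<bullet> om \<epsilon>)" using cx[OF h] by simp
      qed
      have "\<forall>\<eta>\<in>\<Delta>. (x \<bullet> om \<eta>) * (opv \<eta> \<bullet> om \<epsilon>) = 0"
        by (rule iffD1[OF sum_nonneg_eq_0_iff[OF finD nn] s0])
      then have "(x \<bullet> om \<gamma>) * (opv \<gamma> \<bullet> om \<epsilon>) = 0" using g(1) by blast
      then show ?thesis using g(2) by simp
    qed
    define a1 where "a1 = opv \<gamma> \<bullet> om \<alpha>"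
    have og: "opv \<gamma> = a1 *\<^sub>R \<alpha>" unfolding a1_def by (rule coef_single[OF a og0])
    have "\<gamma> = opv (opv \<gamma>)" by (simp add: opp_opp)
    also have "\<dots> = a1 *\<^sub>R x" unfolding og x_def by (simp add: linear_scale[OF opp_linear])
    finally have gx: "\<gamma> = a1 *\<^sub>R x" .
    have "0 = \<gamma> \<bullet> om \<delta>" using om[OF g(1), of \<delta>] d by simp
    also have "\<dots> = a1 * (x \<bullet> om \<delta>)" using gx by simp
    finally have "a1 = 0" using dpos by simp
    then have "\<gamma> = 0" using gx by simp
    then show False using root_nz[OF gR] by simp
  qed
  have "x = (x \<bullet> om \<gamma>) *\<^sub>R \<gamma>" by (rule coef_single[OF g(1) zero])
  then have "x \<bullet> om \<gamma> > 0 \<and> opv \<alpha> = (x \<bullet> om \<gamma>) *\<^sub>R \<gamma>" using g(2) unfolding x_def by simp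
  then show ?thesis using g(1) by blast
qed

end


context rs
begin

lemma OB:
  assumes x: "x \<in> chamber \<Delta>" and d: "\<delta> \<in> \<Delta>" shows "0 \<le> x \<bullet> om \<delta>"
proof -
  define c where "c = (\<lambda>\<eta>. x \<bullet> om \<eta>)"
  define N where "N = {\<eta>\<in>\<Delta>. c \<eta> < 0}"
  define y where "y = (\<Sum>\<eta>\<in>N. (- c \<eta>) *\<^sub>R \<eta>)"
  define z where "z = (\<Sum>\<eta>\<in>\<Delta> - N. c \<eta> *\<^sub>R \<eta>)"
  have NS: "N \<subseteq> \<Delta>" unfolding N_def by auto
  have finN: "finite N" using finite_subset[OF NS finD] .
  have "x = (\<Sum>\<eta>\<in>\<Delta>. c \<eta> *\<^sub>R \<eta>)" unfolding c_def by (rule repr)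
  also have "\<dots> = (\<Sum>\<eta>\<in>\<Delta> - N. c \<eta> *\<^sub>R \<eta>) + (\<Sum>\<eta>\<in>N. c \<eta> *\<^sub>R \<eta>)"
    by (rule sum.subset_diff[OF NS finD])
  also have "(\<Sum>\<eta>\<in>N. c \<eta> *\<^sub>R \<eta>) = - y" unfolding y_def by (simp add: sum_negf[symmetric])
  finally have xyz: "x = z - y" unfolding z_def by simp
  have yx: "0 \<le> y \<bullet> x"
  proof -
    have "y \<bullet> x = (\<Sum>\<eta>\<in>N. (- c \<eta>) * (\<eta> \<bullet> x))" unfolding y_def by (simp add: inner_sum_left)
    also have "\<dots> \<ge> 0"
    proof (rule sum_nonneg)
      fix \<eta> assume h: "\<eta> \<in> N"
      then have hn: "c \<eta> < 0" and hD: "\<eta> \<in> \<Delta>" unfolding N_def by auto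
      have "0 \<le> \<eta> \<bullet> x" using chamberD[OF x hD] .
      then show "0 \<le> (- c \<eta>) * (\<eta> \<bullet> x)" using hn by (simp add: mult_nonpos_nonneg)
    qed
    finally show ?thesis .
  qed
  have yz: "y \<bullet> z \<le> 0"
  proof -
    have "y \<bullet> z = (\<Sum>\<eta>\<in>N. (- c \<eta>) * (\<eta> \<bullet> z))" unfolding y_def by (simp add: inner_sum_left)
    also have "\<dots> \<le> 0"
    proof (rule sum_nonpos)
      fix \<eta> assume h: "\<eta> \<in> N"
      then have hn: "c \<eta> < 0" and hD: "\<eta> \<in> \<Delta>" unfolding N_def by auto
      have "\<eta> \<bullet> z = (\<Sum>\<epsilon>\<in>\<Delta> - N. c \<epsilon> * (\<eta> \<bullet> \<epsilon>))" unfolding z_def by (simp add: inner_sum_right)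
      also have "\<dots> \<le> 0"
      proof (rule sum_nonpos)
        fix \<epsilon> assume e: "\<epsilon> \<in> \<Delta> - N"
        then have "0 \<le> c \<epsilon>" "\<epsilon> \<in> \<Delta>" "\<epsilon> \<noteq> \<eta>" unfolding N_def using h hn by auto
        moreover have "\<eta> \<bullet> \<epsilon> \<le> 0" using simple_obtuse[OF hD] calculation by auto
        ultimately show "c \<epsilon> * (\<eta> \<bullet> \<epsilon>) \<le> 0" by (simp add: mult_nonneg_nonpos)
      qed
      finally show "(- c \<eta>) * (\<eta> \<bullet> z) \<le> 0" using hn by (simp add: mult_nonpos_nonpos)
    qed
    finally show ?thesis .
  qed
  have "y = z - x" using xyz by simp
  then have "y \<bullet> y = y \<bullet> z - y \<bullet> x" by (simp add: inner_diff_right)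
  then have "y \<bullet> y \<le> 0" using yx yz by simp
  then have "y \<bullet> y = 0" using inner_ge_zero[of y] by linarith
  then have y0: "y = 0" by simp
  show ?thesis
  proof (rule ccontr)
    assume "\<not> 0 \<le> x \<bullet> om \<delta>"
    then have dN: "\<delta> \<in> N" unfolding N_def c_def using d by auto
    have "y \<bullet> om \<delta> = (\<Sum>\<eta>\<in>N. (- c \<eta>) * (\<eta> \<bullet> om \<delta>))" unfolding y_def by (simp add: inner_sum_left)
    also have "\<dots> = (\<Sum>\<eta>\<in>N. if \<eta> = \<delta> then - c \<eta> else 0)"
      by (rule sum.cong) (use NS in \<open>auto simp: om\<close>)
    also have "\<dots> = - c \<delta>" using finN dN by simp
    finally have "c \<delta> = 0" using y0 by simp
    then show False using dN unfolding N_def by simp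
  qed
qed

lemma coef_pos_simple:
  assumes d: "d \<in> chamber \<Delta>" and g: "\<gamma> \<in> \<Delta>" and p: "\<gamma> \<bullet> d > 0" shows "d \<bullet> om \<gamma> > 0"
proof (rule ccontr)
  assume "\<not> d \<bullet> om \<gamma> > 0"
  then have c0: "d \<bullet> om \<gamma> \<le> 0" by simp
  have "d \<bullet> \<gamma> = (\<Sum>\<delta>\<in>\<Delta>. (d \<bullet> om \<delta>) * (\<delta> \<bullet> \<gamma>))" by (rule inner_expand)
  also have "\<dots> = (d \<bullet> om \<gamma>) * (\<gamma> \<bullet> \<gamma>) + (\<Sum>\<delta>\<in>\<Delta> - {\<gamma>}. (d \<bullet> om \<delta>) * (\<delta> \<bullet> \<gamma>))"
    by (rule sum.remove[OF finD g])
  also have "\<dots> \<le> 0"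
  proof -
    have "(d \<bullet> om \<gamma>) * (\<gamma> \<bullet> \<gamma>) \<le> 0" using c0 by (simp add: mult_nonpos_nonneg)
    moreover have "(\<Sum>\<delta>\<in>\<Delta> - {\<gamma>}. (d \<bullet> om \<delta>) * (\<delta> \<bullet> \<gamma>)) \<le> 0"
    proof (rule sum_nonpos)
      fix \<delta> assume "\<delta> \<in> \<Delta> - {\<gamma>}"
      then have dd: "\<delta> \<in> \<Delta>" "\<delta> \<noteq> \<gamma>" by auto
      have "0 \<le> d \<bullet> om \<delta>" by (rule OB[OF d dd(1)])
      moreover have "\<delta> \<bullet> \<gamma> \<le> 0" by (rule simple_obtuse[OF dd(1) g dd(2)])
      ultimately show "(d \<bullet> om \<delta>) * (\<delta> \<bullet> \<gamma>) \<le> 0" by (simp add: mult_nonneg_nonpos)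
    qed
    ultimately show ?thesis by simp
  qed
  finally show False using p by (simp add: inner_commute)
qed

end

locale rst = rs R \<Delta> for R :: "'a::euclidean_space set" and \<Delta> +
  fixes \<theta> :: "'a set"
  assumes thD: "\<theta> \<subseteq> \<Delta>" and thne: "\<theta> \<noteq> {}"
    and thi: "(\<lambda>\<alpha>. \<lambda>v. \<alpha> \<bullet> opp R \<Delta> v) ` \<theta> = (\<lambda>\<alpha>. \<lambda>v. \<alpha> \<bullet> v) ` \<theta>"
begin

definition ee :: 'a where
  "ee = (SOME x. \<forall>\<alpha>\<in>\<Delta>. \<alpha> \<bullet> x = (if \<alpha> \<in> \<theta> then 1 else 0))"

lemma ee: assumes "\<alpha> \<in> \<Delta>" shows "\<alpha> \<bullet> ee = (if \<alpha> \<in> \<theta> then 1 else 0)"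
proof -
  have ex: "\<exists>x. \<forall>\<alpha>\<in>\<Delta>. \<alpha> \<bullet> x = (if \<alpha> \<in> \<theta> then 1 else 0)"
    using dual_exists[OF indD, of "\<lambda>\<alpha>. if \<alpha> \<in> \<theta> then 1 else 0"] by simp
  show ?thesis unfolding ee_def using someI_ex[OF ex] assms by blast
qed

lemma vec_eq_inner: assumes "\<And>v. x \<bullet> v = y \<bullet> v" shows "x = y"
proof -
  have "(x - y) \<bullet> (x - y) = 0" using assms[of "x - y"] by (simp add: inner_diff_left)
  then show ?thesis by simp
qed

lemma opp_theta1: assumes a: "\<alpha> \<in> \<theta>" shows "opv \<alpha> \<in> \<theta>"
proof -
  have "(\<lambda>v. \<alpha> \<bullet> opv v) \<in> (\<lambda>\<alpha>. \<lambda>v. \<alpha> \<bullet> v) ` \<theta>" using thi a by blast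
  then obtain \<beta> where b: "\<beta> \<in> \<theta>" "(\<lambda>v. \<alpha> \<bullet> opv v) = (\<lambda>v. \<beta> \<bullet> v)" by blast
  have "opv \<alpha> = \<beta>"
  proof (rule vec_eq_inner)
    fix v
    have "opv \<alpha> \<bullet> v = \<alpha> \<bullet> opv v" by (rule opp_sym)
    also have "\<dots> = \<beta> \<bullet> v" using fun_cong[OF b(2), of v] by simp
    finally show "opv \<alpha> \<bullet> v = \<beta> \<bullet> v" .
  qed
  then show ?thesis using b(1) by simp
qed

lemma opp_theta2: assumes b: "\<beta> \<in> \<theta>" shows "\<exists>\<alpha>\<in>\<theta>. opv \<alpha> = \<beta>"
proof -
  have "(\<lambda>v. \<beta> \<bullet> v) \<in> (\<lambda>\<alpha>. \<lambda>v. \<alpha> \<bullet> opv v) ` \<theta>" using thi b by (metis image_eqI)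
  then obtain \<alpha> where a: "\<alpha> \<in> \<theta>" "(\<lambda>v. \<beta> \<bullet> v) = (\<lambda>v. \<alpha> \<bullet> opv v)" by blast
  have "opv \<alpha> = \<beta>"
  proof (rule vec_eq_inner)
    fix v
    have "opv \<alpha> \<bullet> v = \<alpha> \<bullet> opv v" by (rule opp_sym)
    also have "\<dots> = \<beta> \<bullet> v" using fun_cong[OF a(2), of v] by simp
    finally show "opv \<alpha> \<bullet> v = \<beta> \<bullet> v" .
  qed
  then show ?thesis using a(1) by blast
qed

lemma opp_nontheta:
  assumes a: "\<alpha> \<in> \<Delta>" "\<alpha> \<notin> \<theta>" shows "\<exists>\<gamma>\<in>\<Delta>. \<gamma> \<notin> \<theta> \<and> (\<exists>c>0. opv \<alpha> = c *\<^sub>R \<gamma>)"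
proof -
  obtain \<gamma> c where g: "\<gamma> \<in> \<Delta>" "c > 0" "opv \<alpha> = c *\<^sub>R \<gamma>" using opp_simple[OF a(1)] by blast
  have "\<gamma> \<notin> \<theta>"
  proof
    assume "\<gamma> \<in> \<theta>"
    then obtain \<alpha>' where a': "\<alpha>' \<in> \<theta>" "opv \<alpha>' = \<gamma>" using opp_theta2 by blast
    have "\<alpha> = opv (opv \<alpha>)" by (simp add: opp_opp)
    also have "\<dots> = c *\<^sub>R \<alpha>'" unfolding g(3) a'(2)[symmetric] by (simp add: linear_scale[OF opp_linear] opp_opp)
    finally have aa: "\<alpha> = c *\<^sub>R \<alpha>'" .
    have a'D: "\<alpha>' \<in> \<Delta>" using a' thD by auto
    have ne: "\<alpha>' \<noteq> \<alpha>" using a a' by auto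
    have "\<alpha> \<bullet> om \<alpha> = 1" using om[OF a(1)] by simp
    moreover have "\<alpha> \<bullet> om \<alpha> = c * (\<alpha>' \<bullet> om \<alpha>)" using aa by (metis inner_scaleR_left)
    moreover have "\<alpha>' \<bullet> om \<alpha> = 0" using om[OF a'D, of \<alpha>] ne by simp
    ultimately show False by simp
  qed
  then show ?thesis using g by blast
qed

lemma opp_ee: "opv ee = ee"
proof (rule eq_by_D)
  fix \<alpha> assume a: "\<alpha> \<in> \<Delta>"
  have "\<alpha> \<bullet> opv ee = opv \<alpha> \<bullet> ee" by (simp add: opp_sym)
  also have "\<dots> = \<alpha> \<bullet> ee"
  proof (cases "\<alpha> \<in> \<theta>")
    case True
    then have "opv \<alpha> \<in> \<theta>" by (rule opp_theta1)
    then show ?thesis using ee[OF a] ee True thD by auto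
  next
    case False
    then obtain \<gamma> c where g: "\<gamma> \<in> \<Delta>" "\<gamma> \<notin> \<theta>" "opv \<alpha> = c *\<^sub>R \<gamma>" using opp_nontheta[OF a] by blast
    then show ?thesis using ee[OF a] ee[OF g(1)] False by simp
  qed
  finally show "\<alpha> \<bullet> opv ee = \<alpha> \<bullet> ee" .
qed

abbreviation "Wt \<equiv> weyl_theta R \<Delta> \<theta>"
abbreviation "At \<equiv> a_theta \<Delta> \<theta>"

lemma Wt_weyl: "w \<in> Wt \<Longrightarrow> w \<in> weyl R" by (simp add: weyl_theta_def)
lemma Wt_fix: "w \<in> Wt \<Longrightarrow> v \<in> At \<Longrightarrow> w v = v" by (simp add: weyl_theta_def)

lemma ee_At: "ee \<in> At" unfolding a_theta_def using ee by auto

lemma opp_At: assumes v: "v \<in> At" shows "opv v \<in> At"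
  unfolding a_theta_def
proof safe
  fix \<alpha> assume a: "\<alpha> \<in> \<Delta>" "\<alpha> \<notin> \<theta>"
  obtain \<gamma> c where g: "\<gamma> \<in> \<Delta>" "\<gamma> \<notin> \<theta>" "opv \<alpha> = c *\<^sub>R \<gamma>" using opp_nontheta[OF a] by blast
  have "\<alpha> \<bullet> opv v = opv \<alpha> \<bullet> v" by (simp add: opp_sym)
  also have "\<dots> = c * (\<gamma> \<bullet> v)" using g(3) by simp
  also have "\<gamma> \<bullet> v = 0" using v g(1,2) unfolding a_theta_def by blast
  finally show "\<alpha> \<bullet> opv v = 0" by simp
qed

lemma Wt_id: "id \<in> Wt" by (simp add: weyl_theta_def weyl.weyl_id)

lemma Wt_inv: assumes w: "w \<in> Wt" shows "\<exists>w'\<in>Wt. w' \<circ> w = id \<and> w \<circ> w' = id"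
proof -
  obtain w' where w': "w' \<in> weyl R" "w' \<circ> w = id" "w \<circ> w' = id" using weyl_inv[OF Wt_weyl[OF w]] by blast
  have "w' v = v" if v: "v \<in> At" for v
  proof -
    have "w' (w v) = v" using fun_cong[OF w'(2), of v] by simp
    then show ?thesis using Wt_fix[OF w v] by simp
  qed
  then have "w' \<in> Wt" using w'(1) by (simp add: weyl_theta_def)
  then show ?thesis using w' by blast
qed

lemma Wt_refl: assumes a: "\<alpha> \<in> \<Delta> - \<theta>" and w: "w \<in> Wt" shows "refl \<alpha> \<circ> w \<in> Wt"
proof -
  have "refl \<alpha> \<circ> w \<in> weyl R" using weyl.weyl_step[of \<alpha> R w] a DR Wt_weyl[OF w] by blast
  moreover have "(refl \<alpha> \<circ> w) v = v" if v: "v \<in> At" for v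
  proof -
    have "\<alpha> \<bullet> v = 0" using a v unfolding a_theta_def by blast
    then show ?thesis using Wt_fix[OF w v] by (simp add: refl_fix)
  qed
  ultimately show ?thesis by (simp add: weyl_theta_def)
qed

lemma Wt_opp: assumes w: "w \<in> Wt" shows "opv \<circ> w \<circ> opv \<in> Wt"
proof -
  have lw0: "linear (w0 R \<Delta>)" using weyl_linear[OF w0_weyl] .
  have lw: "linear w" using weyl_linear[OF Wt_weyl[OF w]] .
  have eq: "opv \<circ> w \<circ> opv = w0 R \<Delta> \<circ> w \<circ> w0 R \<Delta>"
    by (simp add: fun_eq_iff opp_eq linear_neg[OF lw0] linear_neg[OF lw])
  have "w0 R \<Delta> \<circ> w \<circ> w0 R \<Delta> \<in> weyl R"
    using weyl_comp[OF weyl_comp[OF w0_weyl Wt_weyl[OF w]] w0_weyl] .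
  moreover have "(opv \<circ> w \<circ> opv) v = v" if v: "v \<in> At" for v
    using Wt_fix[OF w opp_At[OF v]] by (simp add: opp_opp)
  ultimately show ?thesis unfolding eq[symmetric] by (simp add: weyl_theta_def)
qed

lemma Wt_finite: "finite Wt"
  using finite_subset[OF _ weyl_finite] Wt_weyl by blast

lemma Wt_ee: "w \<in> Wt \<Longrightarrow> w ee = ee" using Wt_fix ee_At by blast

definition SS :: "'a set" where "SS = {\<beta>\<in>R. \<beta> \<bullet> ee > 0}"

lemma SS_chamber: assumes b: "\<beta> \<in> SS" and u: "u \<in> chamber \<Delta>" shows "0 \<le> \<beta> \<bullet> u"
proof -
  have bR: "\<beta> \<in> R" and bp: "\<beta> \<bullet> ee > 0" using b unfolding SS_def by auto
  have "\<forall>\<delta>\<in>\<Delta>. 0 \<le> \<beta> \<bullet> om \<delta>"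
  proof (rule ccontr)
    assume "\<not> (\<forall>\<delta>\<in>\<Delta>. 0 \<le> \<beta> \<bullet> om \<delta>)"
    then have n: "\<forall>\<delta>\<in>\<Delta>. \<beta> \<bullet> om \<delta> \<le> 0" using root_sign[OF bR] by blast
    have "\<beta> \<bullet> ee = (\<Sum>\<delta>\<in>\<Delta>. (\<beta> \<bullet> om \<delta>) * (\<delta> \<bullet> ee))" by (rule inner_expand)
    also have "\<dots> \<le> 0"
    proof (rule sum_nonpos)
      fix \<delta> assume d: "\<delta> \<in> \<Delta>"
      have "0 \<le> \<delta> \<bullet> ee" using ee[OF d] by simp
      then show "(\<beta> \<bullet> om \<delta>) * (\<delta> \<bullet> ee) \<le> 0" using n d by (simp add: mult_nonpos_nonneg)
    qed
    finally show False using bp by simp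
  qed
  then show ?thesis using coef_nonneg_chamber[OF _ u] by blast
qed

lemma SS_Wt: assumes w: "w \<in> Wt" and b: "\<beta> \<in> SS" shows "w \<beta> \<in> SS"
proof -
  have "w \<beta> \<in> R" using weyl_maps[OF Wt_weyl[OF w]] b unfolding SS_def by auto
  moreover have "w \<beta> \<bullet> ee = \<beta> \<bullet> ee"
    using isom_inner[OF weyl_isom[OF Wt_weyl[OF w]], of \<beta> ee] Wt_ee[OF w] by simp
  ultimately show ?thesis using b unfolding SS_def by simp
qed

lemma Q_char: "(\<Union>w\<in>Wt. w ` chamber \<Delta>) = {v. \<forall>\<beta>\<in>SS. 0 \<le> \<beta> \<bullet> v}"
proof
  show "(\<Union>w\<in>Wt. w ` chamber \<Delta>) \<subseteq> {v. \<forall>\<beta>\<in>SS. 0 \<le> \<beta> \<bullet> v}"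
  proof
    fix x assume "x \<in> (\<Union>w\<in>Wt. w ` chamber \<Delta>)"
    then obtain w u where wu: "w \<in> Wt" "u \<in> chamber \<Delta>" "x = w u" by blast
    obtain w' where w': "w' \<in> Wt" "w' \<circ> w = id" "w \<circ> w' = id" using Wt_inv[OF wu(1)] by blast
    have "0 \<le> \<beta> \<bullet> x" if b: "\<beta> \<in> SS" for \<beta>
    proof -
      have "\<beta> = w (w' \<beta>)" using fun_cong[OF w'(3), of \<beta>] by simp
      then have "\<beta> \<bullet> x = w' \<beta> \<bullet> u"
        using isom_inner[OF weyl_isom[OF Wt_weyl[OF wu(1)]], of "w' \<beta>" u] wu(3) by simp
      then show ?thesis using SS_chamber[OF SS_Wt[OF w'(1) b] wu(2)] by simp
    qed
    then show "x \<in> {v. \<forall>\<beta>\<in>SS. 0 \<le> \<beta> \<bullet> v}" by blast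
  qed
  show "{v. \<forall>\<beta>\<in>SS. 0 \<le> \<beta> \<bullet> v} \<subseteq> (\<Union>w\<in>Wt. w ` chamber \<Delta>)"
  proof
    fix v assume v: "v \<in> {v. \<forall>\<beta>\<in>SS. 0 \<le> \<beta> \<bullet> v}"
    have G: "Wt \<subseteq> weyl R" using Wt_weyl by blast
    obtain w where w: "w \<in> Wt" "\<forall>\<alpha>\<in>\<Delta> - \<theta>. 0 \<le> \<alpha> \<bullet> w v"
      using fold_max[OF G Wt_id Wt_refl, where v = v] by blast
    obtain w' where w': "w' \<in> Wt" "w' \<circ> w = id" "w \<circ> w' = id" using Wt_inv[OF w(1)] by blast
    have "w v \<in> chamber \<Delta>" unfolding chamber_def
    proof safe
      fix \<alpha> assume a: "\<alpha> \<in> \<Delta>"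
      show "0 \<le> \<alpha> \<bullet> w v"
      proof (cases "\<alpha> \<in> \<theta>")
        case False then show ?thesis using w(2) a by blast
      next
        case True
        have aS: "\<alpha> \<in> SS" unfolding SS_def using a True ee[OF a] DR by auto
        have "\<alpha> = w (w' \<alpha>)" using fun_cong[OF w'(3), of \<alpha>] by simp
        then have "\<alpha> \<bullet> w v = w' \<alpha> \<bullet> v"
          using isom_inner[OF weyl_isom[OF Wt_weyl[OF w(1)]], of "w' \<alpha>" v] by simp
        then show ?thesis using v SS_Wt[OF w'(1) aS] by simp
      qed
    qed
    moreover have "v = w' (w v)" using fun_cong[OF w'(2), of v] by simp
    ultimately show "v \<in> (\<Union>w\<in>Wt. w ` chamber \<Delta>)" using w'(1) by blast
  qed
qed

lemma Q_convex: "convex (\<Union>w\<in>Wt. w ` chamber \<Delta>)"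
proof -
  have "{v. \<forall>\<beta>\<in>SS. 0 \<le> \<beta> \<bullet> v} = (\<Inter>\<beta>\<in>SS. {v. \<beta> \<bullet> v \<ge> 0})" by auto
  moreover have "convex (\<Inter>\<beta>\<in>SS. {v. \<beta> \<bullet> v \<ge> 0})"
    by (rule convex_INT) (rule convex_halfspace_ge)
  ultimately show ?thesis unfolding Q_char by simp
qed

lemma ee_pos:
  assumes d: "d \<in> chamber \<Delta>" and g: "\<gamma> \<in> \<theta>" "\<gamma> \<bullet> d > 0" shows "d \<bullet> ee > 0"
proof -
  have gD: "\<gamma> \<in> \<Delta>" using g thD by auto
  have t: "\<And>\<delta>. \<delta> \<in> \<Delta> \<Longrightarrow> 0 \<le> (d \<bullet> om \<delta>) * (\<delta> \<bullet> ee)"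
    using OB[OF d] ee by simp
  have "d \<bullet> ee = (\<Sum>\<delta>\<in>\<Delta>. (d \<bullet> om \<delta>) * (\<delta> \<bullet> ee))" by (rule inner_expand)
  also have "\<dots> = (d \<bullet> om \<gamma>) * (\<gamma> \<bullet> ee) + (\<Sum>\<delta>\<in>\<Delta> - {\<gamma>}. (d \<bullet> om \<delta>) * (\<delta> \<bullet> ee))"
    by (rule sum.remove[OF finD gD])
  also have "\<dots> > 0"
  proof -
    have "(d \<bullet> om \<gamma>) * (\<gamma> \<bullet> ee) > 0" using coef_pos_simple[OF d gD g(2)] ee[OF gD] g(1) by simp
    moreover have "(\<Sum>\<delta>\<in>\<Delta> - {\<gamma>}. (d \<bullet> om \<delta>) * (\<delta> \<bullet> ee)) \<ge> 0"
      by (rule sum_nonneg) (use t in blast)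
    ultimately show ?thesis by simp
  qed
  finally show ?thesis .
qed

end


lemma isom_norm: "isom f \<Longrightarrow> norm (f z) = norm z"
  by (simp add: norm_eq_sqrt_inner isom_inner)

lemma isom_dist: assumes f: "isom f" shows "dist (f x) (f y) = dist x y"
proof -
  have "f x - f y = f (x - y)" using linear_diff[OF isom_linear[OF f]] by simp
  then show ?thesis using isom_norm[OF f, of "x - y"] by (simp add: dist_norm)
qed

context rst
begin

lemma Wt_comp: "w1 \<in> Wt \<Longrightarrow> w2 \<in> Wt \<Longrightarrow> w1 \<circ> w2 \<in> Wt"
  unfolding weyl_theta_def using weyl_comp by auto

lemma chamber_closed: "closed (chamber \<Delta>)"
proof -
  have "chamber \<Delta> = (\<Inter>\<alpha>\<in>\<Delta>. {v. \<alpha> \<bullet> v \<ge> 0})" unfolding chamber_def by auto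
  moreover have "closed (\<Inter>\<alpha>\<in>\<Delta>. {v. \<alpha> \<bullet> v \<ge> 0})" by (intro closed_INT ballI closed_halfspace_ge)
  ultimately show ?thesis by simp
qed

lemma chamber_scale: "v \<in> chamber \<Delta> \<Longrightarrow> t \<ge> 0 \<Longrightarrow> t *\<^sub>R v \<in> chamber \<Delta>"
  unfolding chamber_def by simp

lemma main:
  assumes adm: "admissible R \<Delta> \<theta> D"
    and C0o: "openin (top_of_set (chamber \<Delta>)) C0" and C0c: "pos_cone C0"
    and DC0: "D - {0} \<subseteq> C0"
  shows "\<exists>C. admissible R \<Delta> \<theta> C \<and>
           D - {0} \<subseteq> (top_of_set (chamber \<Delta>)) interior_of C \<and>
           C \<subseteq> C0 \<union> {0}"
proof -
  have Dcl: "closed D" and Dcone: "pos_cone D" and Dch: "D \<subseteq> chamber \<Delta>"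
    and Dopp: "opv ` D = D" and Pconv: "convex (\<Union>w\<in>Wt. w ` D)"
    and Dw: "D \<inter> (\<Union>\<alpha>\<in>\<theta>. {v. \<alpha> \<bullet> v = 0}) = {0}"
    using adm unfolding admissible_def by auto
  define P where "P = (\<Union>w\<in>Wt. w ` D)"
  have D0: "0 \<in> D" using Dw by auto
  have dwall: "\<And>d \<gamma>. d \<in> D \<Longrightarrow> \<gamma> \<in> \<theta> \<Longrightarrow> \<gamma> \<bullet> d = 0 \<Longrightarrow> d = 0" using Dw by blast
  have dpos: "d \<bullet> ee > 0" if d: "d \<in> D" "d \<noteq> 0" for d
  proof -
    obtain \<gamma> where g: "\<gamma> \<in> \<theta>" using thne by blast
    have "\<gamma> \<bullet> d \<noteq> 0" using dwall d g by blast
    moreover have "\<gamma> \<bullet> d \<ge> 0" using chamberD[of d \<gamma>] Dch d g thD by blast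
    ultimately show ?thesis using ee_pos[of d \<gamma>] Dch d g by force
  qed
  have Pcl: "closed P" unfolding P_def
  proof (rule closed_UN[OF Wt_finite], rule ballI)
    fix w assume w: "w \<in> Wt"
    have iw: "isom w" using weyl_isom[OF Wt_weyl[OF w]] .
    show "closed (w ` D)" by (rule closed_injective_linear_image[OF Dcl isom_linear[OF iw] isom_inj[OF iw]])
  qed
  have DP: "D \<subseteq> P"
  proof
    fix d assume d: "d \<in> D"
    have "d = id d" by simp
    then show "d \<in> P" unfolding P_def using Wt_id d by blast
  qed
  have P0: "0 \<in> P" using DP D0 by auto
  have Pne: "P \<noteq> {}" using P0 by auto
  have Pconv': "convex P" using Pconv unfolding P_def .
  have PD: "p \<in> D" if p: "p \<in> P" "p \<in> chamber \<Delta>" for p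
  proof -
    obtain w d where wd: "w \<in> Wt" "d \<in> D" "p = w d" using p unfolding P_def by blast
    have "w d = d" using fundamental[OF Wt_weyl[OF wd(1)]] Dch wd p by blast
    then show ?thesis using wd by simp
  qed
  have Pinv: "w p \<in> P" if w: "w \<in> Wt" and p: "p \<in> P" for w p
  proof -
    obtain w' d where wd: "w' \<in> Wt" "d \<in> D" "p = w' d" using p unfolding P_def by blast
    have ww: "w \<circ> w' \<in> Wt" by (rule Wt_comp[OF w wd(1)])
    have "w p = (w \<circ> w') d" using wd(3) by simp
    then show ?thesis unfolding P_def using ww wd(2) by blast
  qed
  have Popp: "opv p \<in> P" if p: "p \<in> P" for p
  proof -
    obtain w d where wd: "w \<in> Wt" "d \<in> D" "p = w d" using p unfolding P_def by blast
    have "opv d \<in> D" using Dopp wd(2) by blast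
    moreover have "opv p = (opv \<circ> w \<circ> opv) (opv d)" using wd(3) by (simp add: opp_opp)
    ultimately show ?thesis unfolding P_def using Wt_opp[OF wd(1)] by blast
  qed
  have Pcone: "t *\<^sub>R p \<in> P" if p: "p \<in> P" and t: "t > 0" for p t
  proof -
    obtain w d where wd: "w \<in> Wt" "d \<in> D" "p = w d" using p unfolding P_def by blast
    have "t *\<^sub>R d \<in> D" using Dcone wd(2) t unfolding pos_cone_def by blast
    moreover have "t *\<^sub>R p = w (t *\<^sub>R d)" using wd(3) linear_scale[OF weyl_linear[OF Wt_weyl[OF wd(1)]]] by simp
    ultimately show ?thesis unfolding P_def using wd(1) by blast
  qed
  obtain U where U: "open U" "C0 = chamber \<Delta> \<inter> U" using C0o unfolding openin_open by blast
  define K where "K = {v. v \<in> chamber \<Delta> \<and> norm v = 1 \<and> (v \<notin> C0 \<or> (\<exists>\<gamma>\<in>\<theta>. \<gamma> \<bullet> v = 0))}"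
  have Keq: "K = (chamber \<Delta> \<inter> sphere 0 1) \<inter> ((chamber \<Delta> - U) \<union> (\<Union>\<gamma>\<in>\<theta>. {v. \<gamma> \<bullet> v = 0}))"
    unfolding K_def U(2) by auto
  have finth: "finite \<theta>" using finite_subset[OF thD finD] .
  have Kcl: "closed K" unfolding Keq
    by (intro closed_Int closed_Un closed_Diff chamber_closed closed_sphere U(1) closed_UN[OF finth] ballI closed_hyperplane)
  have Kb: "bounded K" unfolding K_def by (rule bounded_subset[OF bounded_sphere[of 0 1]]) auto
  have Kc: "compact K" using Kcl Kb by (simp add: compact_eq_bounded_closed)
  have Kpos: "infdist v P > 0" if v: "v \<in> K" for v
  proof (rule ccontr)
    assume "\<not> infdist v P > 0"
    then have "infdist v P = 0" using infdist_nonneg[of v P] by simp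
    then have "v \<in> closure P" using in_closure_iff_infdist_zero[OF Pne] by simp
    then have "v \<in> P" using Pcl by simp
    moreover have vc: "v \<in> chamber \<Delta>" and vn: "norm v = 1" using v unfolding K_def by auto
    ultimately have vD: "v \<in> D" using PD by blast
    have v0: "v \<noteq> 0" using vn by auto
    then have "v \<in> C0" using DC0 vD by blast
    moreover have "\<not> (\<exists>\<gamma>\<in>\<theta>. \<gamma> \<bullet> v = 0)" using dwall vD v0 by blast
    ultimately show False using v unfolding K_def by blast
  qed
  obtain \<epsilon> where \<epsilon>: "\<epsilon> > 0" "\<And>v. v \<in> K \<Longrightarrow> \<epsilon> * norm ee < infdist v P"
  proof (cases "K = {}")
    case True then show ?thesis using that[of 1] by simp
  next
    case False
    have "continuous_on K (\<lambda>x. infdist x P)" by (intro continuous_on_infdist continuous_on_id)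
    then obtain m where m: "m \<in> K" "\<And>y. y \<in> K \<Longrightarrow> infdist m P \<le> infdist y P"
      using continuous_attains_inf[OF Kc False] by blast
    define c where "c = 2 * norm ee + 2"
    have nc: "norm ee < c" unfolding c_def using norm_ge_zero[of ee] by linarith
    have c0: "c > 0" using nc norm_ge_zero[of ee] by linarith
    define \<epsilon> where "\<epsilon> = infdist m P / c"
    have mp: "infdist m P > 0" using Kpos[OF m(1)] .
    have e0: "\<epsilon> > 0" unfolding \<epsilon>_def using mp c0 by simp
    have ec: "\<epsilon> * c = infdist m P" unfolding \<epsilon>_def using c0 by simp
    have "\<epsilon> * norm ee < \<epsilon> * c" by (rule mult_strict_left_mono[OF nc e0])
    then have "\<epsilon> * norm ee < infdist m P" using ec by simp
    then show ?thesis using that[of \<epsilon>] e0 m(2) by force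
  qed
  define N where "N = {v. \<exists>p\<in>P. dist v p \<le> \<epsilon> * (v \<bullet> ee)}"
  define C where "C = chamber \<Delta> \<inter> N"
  have Ninv: "g v \<in> N" if g: "isom g" "g ee = ee" "\<And>p. p \<in> P \<Longrightarrow> g p \<in> P" and v: "v \<in> N" for g v
  proof -
    obtain p where p: "p \<in> P" "dist v p \<le> \<epsilon> * (v \<bullet> ee)" using v unfolding N_def by blast
    have "dist (g v) (g p) = dist v p" by (rule isom_dist[OF g(1)])
    moreover have "g v \<bullet> ee = v \<bullet> ee" using isom_inner[OF g(1), of v ee] g(2) by simp
    ultimately show ?thesis unfolding N_def using g(3)[OF p(1)] p(2) by force
  qed
  have NWt: "w v \<in> N" if w: "w \<in> Wt" and v: "v \<in> N" for w v
    by (rule Ninv[OF weyl_isom[OF Wt_weyl[OF w]] Wt_ee[OF w] Pinv[OF w] v])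
  have Nopp: "opv v \<in> N" if v: "v \<in> N" for v
    by (rule Ninv[OF opp_isom opp_ee Popp v])
  have Neq: "N = {v. infdist v P \<le> \<epsilon> * (v \<bullet> ee)}"
  proof (intro set_eqI iffI)
    fix v assume "v \<in> N"
    then obtain p where "p \<in> P" "dist v p \<le> \<epsilon> * (v \<bullet> ee)" unfolding N_def by blast
    then show "v \<in> {v. infdist v P \<le> \<epsilon> * (v \<bullet> ee)}" using infdist_le[of p P v] by simp
  next
    fix v assume v: "v \<in> {v. infdist v P \<le> \<epsilon> * (v \<bullet> ee)}"
    obtain p where "p \<in> P" "infdist v P = dist v p" using infdist_attains_inf[OF Pcl Pne] by blast
    then show "v \<in> N" unfolding N_def using v by auto
  qed
  have Ncl: "closed N" unfolding Neq
    by (intro closed_Collect_le continuous_on_infdist continuous_intros)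
  have Nconv: "convex N"
  proof (rule convexI)
    fix x y :: 'a and u v :: real
    assume x: "x \<in> N" and y: "y \<in> N" and u: "0 \<le> u" and v: "0 \<le> v" and uv: "u + v = 1"
    obtain p where p: "p \<in> P" "dist x p \<le> \<epsilon> * (x \<bullet> ee)" using x unfolding N_def by blast
    obtain q where q: "q \<in> P" "dist y q \<le> \<epsilon> * (y \<bullet> ee)" using y unfolding N_def by blast
    have pq: "u *\<^sub>R p + v *\<^sub>R q \<in> P" using convexD[OF Pconv' p(1) q(1) u v uv] .
    have "dist (u *\<^sub>R x + v *\<^sub>R y) (u *\<^sub>R p + v *\<^sub>R q) = norm (u *\<^sub>R (x - p) + v *\<^sub>R (y - q))"
      by (simp add: dist_norm algebra_simps)
    also have "\<dots> \<le> norm (u *\<^sub>R (x - p)) + norm (v *\<^sub>R (y - q))" by (rule norm_triangle_ineq)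
    also have "\<dots> = u * dist x p + v * dist y q" using u v by (simp add: dist_norm)
    also have "\<dots> \<le> u * (\<epsilon> * (x \<bullet> ee)) + v * (\<epsilon> * (y \<bullet> ee))"
      using p(2) q(2) u v by (intro add_mono mult_left_mono) auto
    also have "\<dots> = \<epsilon> * ((u *\<^sub>R x + v *\<^sub>R y) \<bullet> ee)" by (simp add: algebra_simps inner_add_left)
    finally show "u *\<^sub>R x + v *\<^sub>R y \<in> N" unfolding N_def using pq by blast
  qed
  have notK: "v \<notin> K" if v: "v \<in> C" for v
  proof
    assume vK: "v \<in> K"
    obtain p where p: "p \<in> P" "dist v p \<le> \<epsilon> * (v \<bullet> ee)" using v unfolding C_def N_def by blast
    have "v \<bullet> ee \<le> norm v * norm ee" by (rule norm_cauchy_schwarz)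
    then have "v \<bullet> ee \<le> norm ee" using vK unfolding K_def by simp
    then have "\<epsilon> * (v \<bullet> ee) \<le> \<epsilon> * norm ee" using \<epsilon>(1) by simp
    moreover have "infdist v P \<le> dist v p" by (rule infdist_le[OF p(1)])
    ultimately show False using \<epsilon>(2)[OF vK] p(2) by simp
  qed
  have Ccone: "pos_cone C" unfolding pos_cone_def
  proof (intro ballI allI impI)
    fix v and t :: real assume v: "v \<in> C" and t: "t > 0"
    obtain p where p: "p \<in> P" "dist v p \<le> \<epsilon> * (v \<bullet> ee)" using v unfolding C_def N_def by blast
    have "dist (t *\<^sub>R v) (t *\<^sub>R p) = t * dist v p" using t by (simp add: dist_norm scaleR_diff_right[symmetric])
    also have "\<dots> \<le> t * (\<epsilon> * (v \<bullet> ee))" using p(2) t by simp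
    also have "\<dots> = \<epsilon> * ((t *\<^sub>R v) \<bullet> ee)" by simp
    finally have "t *\<^sub>R v \<in> N" unfolding N_def using Pcone[OF p(1) t] by blast
    moreover have "t *\<^sub>R v \<in> chamber \<Delta>" using v t chamber_scale unfolding C_def by auto
    ultimately show "t *\<^sub>R v \<in> C" unfolding C_def by blast
  qed
  have unit: "v /\<^sub>R norm v \<in> C \<and> norm (v /\<^sub>R norm v) = 1" if v: "v \<in> C" "v \<noteq> 0" for v
  proof -
    have "inverse (norm v) > 0" using v by simp
    then have "inverse (norm v) *\<^sub>R v \<in> C" using Ccone v unfolding pos_cone_def by blast
    then show ?thesis using v by simp
  qed
  have C0in: "0 \<in> C" unfolding C_def N_def using P0 by (auto simp: chamber_def)
  have Ccl: "closed C" unfolding C_def using chamber_closed Ncl by blast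
  have Cch: "C \<subseteq> chamber \<Delta>" unfolding C_def by blast
  have Copp: "opv ` C = C"
  proof
    show "opv ` C \<subseteq> C" unfolding C_def using opp_chamber Nopp by blast
    show "C \<subseteq> opv ` C"
    proof
      fix v assume v: "v \<in> C"
      then have "opv v \<in> C" unfolding C_def using opp_chamber Nopp by blast
      then show "v \<in> opv ` C" by (intro image_eqI[of _ _ "opv v"]) (simp_all add: opp_opp)
    qed
  qed
  have WC: "(\<Union>w\<in>Wt. w ` C) = N \<inter> (\<Union>w\<in>Wt. w ` chamber \<Delta>)"
  proof
    show "(\<Union>w\<in>Wt. w ` C) \<subseteq> N \<inter> (\<Union>w\<in>Wt. w ` chamber \<Delta>)"
      unfolding C_def using NWt by blast
    show "N \<inter> (\<Union>w\<in>Wt. w ` chamber \<Delta>) \<subseteq> (\<Union>w\<in>Wt. w ` C)"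
    proof
      fix v assume v: "v \<in> N \<inter> (\<Union>w\<in>Wt. w ` chamber \<Delta>)"
      then obtain w u where wu: "w \<in> Wt" "u \<in> chamber \<Delta>" "v = w u" by blast
      obtain w' where w': "w' \<in> Wt" "w' \<circ> w = id" "w \<circ> w' = id" using Wt_inv[OF wu(1)] by blast
      have "u = w' v" using fun_cong[OF w'(2), of u] wu(3) by simp
      then have "u \<in> N" using NWt[OF w'(1)] v by blast
      then have "u \<in> C" unfolding C_def using wu(2) by blast
      then show "v \<in> (\<Union>w\<in>Wt. w ` C)" using wu by blast
    qed
  qed
  have Cconv: "convex (\<Union>w\<in>Wt. w ` C)" unfolding WC by (rule convex_Int[OF Nconv Q_convex])
  have Cwall: "C \<inter> (\<Union>\<alpha>\<in>\<theta>. {v. \<alpha> \<bullet> v = 0}) = {0}"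
  proof
    show "{0} \<subseteq> C \<inter> (\<Union>\<alpha>\<in>\<theta>. {v. \<alpha> \<bullet> v = 0})" using C0in thne by auto
    show "C \<inter> (\<Union>\<alpha>\<in>\<theta>. {v. \<alpha> \<bullet> v = 0}) \<subseteq> {0}"
    proof
      fix v assume v: "v \<in> C \<inter> (\<Union>\<alpha>\<in>\<theta>. {v. \<alpha> \<bullet> v = 0})"
      then obtain \<gamma> where g: "\<gamma> \<in> \<theta>" "\<gamma> \<bullet> v = 0" "v \<in> C" by blast
      show "v \<in> {0}"
      proof (rule ccontr)
        assume "v \<notin> {0}"
        then have v0: "v \<noteq> 0" by simp
        have u: "v /\<^sub>R norm v \<in> C" "norm (v /\<^sub>R norm v) = 1" using unit[OF g(3) v0] by auto
        have "\<gamma> \<bullet> (v /\<^sub>R norm v) = 0" using g(2) by simp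
        then have "v /\<^sub>R norm v \<in> K" unfolding K_def using u g(1) Cch by blast
        then show False using notK[OF u(1)] by blast
      qed
    qed
  qed
  have Cadm: "admissible R \<Delta> \<theta> C"
    unfolding admissible_def using Ccl Ccone Cch Copp Cconv Cwall by blast
  have Cint: "D - {0} \<subseteq> (top_of_set (chamber \<Delta>)) interior_of C"
  proof
    fix d assume d: "d \<in> D - {0}"
    have dp: "d \<bullet> ee > 0" using dpos d by blast
    define r where "r = \<epsilon> * (d \<bullet> ee) / (1 + \<epsilon> * norm ee)"
    have "\<epsilon> * norm ee \<ge> 0" using \<epsilon>(1) by simp
    then have den: "1 + \<epsilon> * norm ee > 0" by linarith
    have r0: "r > 0" unfolding r_def using \<epsilon>(1) dp den by simp
    have rr: "r * (1 + \<epsilon> * norm ee) = \<epsilon> * (d \<bullet> ee)" unfolding r_def using den by simp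
    define T where "T = chamber \<Delta> \<inter> ball d r"
    have To: "openin (top_of_set (chamber \<Delta>)) T" unfolding T_def by (rule openin_open_Int) simp
    have dT: "d \<in> T" unfolding T_def using d Dch r0 by auto
    have TC: "T \<subseteq> C"
    proof
      fix v assume v: "v \<in> T"
      then have vc: "v \<in> chamber \<Delta>" and vd: "dist v d < r" unfolding T_def by (auto simp: dist_commute)
      have "(d - v) \<bullet> ee \<le> norm (d - v) * norm ee" by (rule norm_cauchy_schwarz)
      also have "\<dots> = dist v d * norm ee" by (simp add: dist_norm norm_minus_commute)
      also have "\<dots> \<le> r * norm ee" using vd by (simp add: mult_right_mono)
      finally have "d \<bullet> ee - v \<bullet> ee \<le> r * norm ee" by (simp add: inner_diff_left)
      then have "\<epsilon> * (d \<bullet> ee) - \<epsilon> * (v \<bullet> ee) \<le> \<epsilon> * (r * norm ee)"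
        using \<epsilon>(1) by (simp add: right_diff_distrib[symmetric])
      then have "r \<le> \<epsilon> * (v \<bullet> ee)" using rr by (simp add: algebra_simps)
      then have "dist v d \<le> \<epsilon> * (v \<bullet> ee)" using vd by simp
      moreover have "d \<in> P" using DP d by blast
      ultimately show "v \<in> C" unfolding C_def N_def using vc by blast
    qed
    show "d \<in> (top_of_set (chamber \<Delta>)) interior_of C"
      unfolding interior_of_def using To dT TC by blast
  qed
  have CC0: "C \<subseteq> C0 \<union> {0}"
  proof
    fix v assume v: "v \<in> C"
    show "v \<in> C0 \<union> {0}"
    proof (cases "v = 0")
      case True then show ?thesis by simp
    next
      case False
      have u: "v /\<^sub>R norm v \<in> C" "norm (v /\<^sub>R norm v) = 1" using unit[OF v False] by auto
      have "v /\<^sub>R norm v \<in> chamber \<Delta>" using u Cch by blast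
      then have "v /\<^sub>R norm v \<in> C0" using notK[OF u(1)] u(2) unfolding K_def by blast
      moreover have "norm v > 0" using False by simp
      ultimately have "norm v *\<^sub>R (v /\<^sub>R norm v) \<in> C0" using C0c unfolding pos_cone_def by blast
      then show ?thesis using False by simp
    qed
  qed
  show ?thesis using Cadm Cint CC0 by blast
qed

end

theorem lemma5p4:
  fixes R \<Delta> \<theta> D C0 :: "'a::euclidean_space set"
  assumes "root_system R" and "is_base R \<Delta>"
    and "\<theta> \<subseteq> \<Delta>" and "\<theta> \<noteq> {}"
    and "(\<lambda>\<alpha>. \<lambda>v. \<alpha> \<bullet> opp R \<Delta> v) ` \<theta> = (\<lambda>\<alpha>. \<lambda>v. \<alpha> \<bullet> v) ` \<theta>"
    and "admissible R \<Delta> \<theta> D"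
    and "openin (top_of_set (chamber \<Delta>)) C0" and "pos_cone C0"
    and "D - {0} \<subseteq> C0"
  shows "\<exists>C. admissible R \<Delta> \<theta> C \<and>
           D - {0} \<subseteq> (top_of_set (chamber \<Delta>)) interior_of C \<and>
           C \<subseteq> C0 \<union> {0}"
proof -
  interpret rst R \<Delta> \<theta>
    by (unfold_locales) (use assms(1-5) in auto)
  show ?thesis by (rule main[OF assms(6-9)])
qed

end
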